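(* Let $\mathcal{O}$ be an order in a number field $K$, let $\mathfrak{d}\subseteq\mathfrak{m}\subseteq\mathcal{O}$ be nonzero integral ideals, and let $\Sigma$ be any (possibly empty) set of real places of $K$. Then the inclusion $J^*_{\mathfrak{d}}(\mathcal{O})\subseteq J^*_{\mathfrak{m}}(\mathcal{O})$ induces an isomorphism $$\mathrm{Cl}_{\mathfrak{m},\Sigma}(\mathcal{O})=\frac{J^*_{\mathfrak{d}}(\mathcal{O})}{P^{\mathfrak{d}}_{\mathfrak{m},\Sigma}(\mathcal{O})}.$$
   Context: An order is a subring of $K$ containing $1$, free of rank $[K:\mathbb Q]$ over $\mathbb Z$. A fractional $\mathcal O$-ideal is an $\mathcal O$-submodule $\mathfrak a\subseteq K$ with $\lambda\mathfrak a\subseteq\mathcal O$ for some $\lambda\in K^\times$, invertible if $\mathfrak a\mathfrak b=\mathcal O$ for some fractional $\mathfrak b$; it is coprime to an integral ideal $\mathfrak c$ if $\mathfrak a=(\mathfrak a_1:\mathfrak b_1)=\{x\in K:x\mathfrak b_1\subseteq\mathfrak a_1\}$ with $\mathfrak a_1$ integral, $\mathfrak b_1$ invertible integral, both coprime to $\mathfrak c$ (sum equal to $\mathcal O$). $J^*_{\mathfrak c}(\mathcal O)$ is the group of invertible fractional ideals coprime to $\mathfrak c$. For $\alpha\in K$, $\alpha\equiv1\pmod{\mathfrak m}$ means $\alpha-1\in\mathfrak m\mathcal O[S_{\mathfrak m}^{-1}]$, $S_{\mathfrak m}=\{a\in\mathcal O:a\mathcal O+\mathfrak m=\mathcal O\}$.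 $P_{\mathfrak m,\Sigma}(\mathcal O)=\{\alpha\mathcal O:\alpha\in K^\times,\alpha\equiv1\pmod{\mathfrak m},\rho(\alpha)>0\ \forall\rho\in\Sigma\}$, $\mathrm{Cl}_{\mathfrak m,\Sigma}(\mathcal O)=J^*_{\mathfrak m}(\mathcal O)/P_{\mathfrak m,\Sigma}(\mathcal O)$, and $P^{\mathfrak d}_{\mathfrak m,\Sigma}(\mathcal O)$ is the subgroup of those $\alpha\mathcal O\in P_{\mathfrak m,\Sigma}(\mathcal O)$ with $\alpha\mathcal O$ coprime to $\mathfrak d$. *)

theory Defs
  imports Complex_Main "HOL-Algebra.Coset"
begin

text \<open>The number field K is the whole type 'a (a field of characteristic 0);
finite-dimensionality over Q is part of the definition of an order below.\<close>

definition nf_is_order :: "'a::field_char_0 set \<Rightarrow> bool" where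
  "nf_is_order Oc \<longleftrightarrow>
     1 \<in> Oc \<and> (\<forall>x\<in>Oc. \<forall>y\<in>Oc. x + y \<in> Oc \<and> x - y \<in> Oc \<and> x * y \<in> Oc) \<and>
     (\<exists>(n::nat) (b::nat \<Rightarrow> 'a).
        \<comment> \<open>b 0..b (n-1) is a Q-basis of K, so n = [K:Q]\<close>
        (\<forall>c::nat \<Rightarrow> rat. (\<Sum>i<n. of_rat (c i) * b i) = 0 \<longrightarrow> (\<forall>i<n. c i = 0)) \<and>
        (\<forall>x. \<exists>c::nat \<Rightarrow> rat. x = (\<Sum>i<n. of_rat (c i) * b i)) \<and>
        \<comment> \<open>and a Z-basis of Oc\<close>
        Oc = {(\<Sum>i<n. of_int (c i) * b i) | c::nat \<Rightarrow> int. True})"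

definition nf_integral_ideal :: "'a::field_char_0 set \<Rightarrow> 'a set \<Rightarrow> bool" where
  "nf_integral_ideal Oc I \<longleftrightarrow> I \<subseteq> Oc \<and> 0 \<in> I \<and> (\<forall>x\<in>I. \<forall>y\<in>I. x + y \<in> I) \<and>
     (\<forall>r\<in>Oc. \<forall>x\<in>I. r * x \<in> I)"

definition nf_fractional_ideal :: "'a::field_char_0 set \<Rightarrow> 'a set \<Rightarrow> bool" where
  "nf_fractional_ideal Oc A \<longleftrightarrow> 0 \<in> A \<and> (\<forall>x\<in>A. \<forall>y\<in>A. x + y \<in> A) \<and>
     (\<forall>r\<in>Oc. \<forall>x\<in>A. r * x \<in> A) \<and> (\<exists>l. l \<noteq> 0 \<and> (\<lambda>x. l * x) ` A \<subseteq> Oc)"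

definition nf_ideal_mult :: "'a::field_char_0 set \<Rightarrow> 'a set \<Rightarrow> 'a set" where
  "nf_ideal_mult A B = {(\<Sum>i<n. a i * b i) | (n::nat) a b. \<forall>i<n. a i \<in> A \<and> b i \<in> B}"

definition nf_ideal_sum :: "'a::field_char_0 set \<Rightarrow> 'a set \<Rightarrow> 'a set" where
  "nf_ideal_sum A B = {a + b | a b. a \<in> A \<and> b \<in> B}"

definition nf_colon :: "'a::field_char_0 set \<Rightarrow> 'a set \<Rightarrow> 'a set" where
  "nf_colon A B = {x. \<forall>b\<in>B. x * b \<in> A}"

definition nf_invertible :: "'a::field_char_0 set \<Rightarrow> 'a set \<Rightarrow> bool" where
  "nf_invertible Oc A \<longleftrightarrow> nf_fractional_ideal Oc A \<and>
     (\<exists>B. nf_fractional_ideal Oc B \<and> nf_ideal_mult A B = Oc)"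

definition nf_frac_coprime :: "'a::field_char_0 set \<Rightarrow> 'a set \<Rightarrow> 'a set \<Rightarrow> bool" where
  "nf_frac_coprime Oc A C \<longleftrightarrow>
     (\<exists>A1 B1. A = nf_colon A1 B1 \<and> nf_integral_ideal Oc A1 \<and> nf_integral_ideal Oc B1 \<and>
        nf_invertible Oc B1 \<and> nf_ideal_sum A1 C = Oc \<and> nf_ideal_sum B1 C = Oc)"

definition nf_Jstar :: "'a::field_char_0 set \<Rightarrow> 'a set \<Rightarrow> 'a set set" where
  "nf_Jstar Oc C = {A. nf_invertible Oc A \<and> nf_frac_coprime Oc A C}"

definition nf_principal :: "'a::field_char_0 set \<Rightarrow> 'a \<Rightarrow> 'a set" where
  "nf_principal Oc a = (\<lambda>x. a * x) ` Oc"

definition nf_S :: "'a::field_char_0 set \<Rightarrow> 'a set \<Rightarrow> 'a set" where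
  "nf_S Oc M = {a \<in> Oc. nf_ideal_sum (nf_principal Oc a) M = Oc}"

definition nf_localize :: "'a::field_char_0 set \<Rightarrow> 'a set \<Rightarrow> 'a set" where
  "nf_localize Oc S = {x / s | x s. x \<in> Oc \<and> s \<in> S \<and> s \<noteq> 0}"

definition nf_cong1 :: "'a::field_char_0 set \<Rightarrow> 'a set \<Rightarrow> 'a \<Rightarrow> bool" where
  "nf_cong1 Oc M \<alpha> \<longleftrightarrow> \<alpha> - 1 \<in> nf_ideal_mult M (nf_localize Oc (nf_S Oc M))"

text \<open>Real places = real embeddings (field homomorphisms K \<rightarrow> R).\<close>
definition nf_real_embedding :: "('a::field_char_0 \<Rightarrow> real) \<Rightarrow> bool" where
  "nf_real_embedding \<rho> \<longleftrightarrow> \<rho> 1 = 1 \<and> (\<forall>x y. \<rho> (x + y) = \<rho> x + \<rho> y) \<and>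
     (\<forall>x y. \<rho> (x * y) = \<rho> x * \<rho> y)"

definition nf_P :: "'a::field_char_0 set \<Rightarrow> 'a set \<Rightarrow> ('a \<Rightarrow> real) set \<Rightarrow> 'a set set" where
  "nf_P Oc M Sig = {nf_principal Oc \<alpha> | \<alpha>. \<alpha> \<noteq> 0 \<and> nf_cong1 Oc M \<alpha> \<and> (\<forall>\<rho>\<in>Sig. \<rho> \<alpha> > 0)}"

definition nf_Pd :: "'a::field_char_0 set \<Rightarrow> 'a set \<Rightarrow> 'a set \<Rightarrow> ('a \<Rightarrow> real) set \<Rightarrow> 'a set set" where
  "nf_Pd Oc D M Sig = {A \<in> nf_P Oc M Sig. nf_frac_coprime Oc A D}"

definition nf_Jgroup :: "'a::field_char_0 set \<Rightarrow> 'a set \<Rightarrow> 'a set monoid" where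
  "nf_Jgroup Oc C = \<lparr>carrier = nf_Jstar Oc C, mult = nf_ideal_mult, one = Oc\<rparr>"

end

theory Submission
  imports Defs
begin

lemma order_basis:
  assumes "nf_is_order Oc"
  obtains n b where "\<forall>x. \<exists>c::nat \<Rightarrow> rat. x = (\<Sum>i<n. of_rat (c i) * b i)"
    and "Oc = {(\<Sum>i<n. of_int (c i) * b i) | c::nat \<Rightarrow> int. True}"
  using assms unfolding nf_is_order_def by blast

lemma order_basis_O:
  assumes "nf_is_order Oc"
  obtains n and b :: "nat \<Rightarrow> 'a::field_char_0" where "Oc = {(\<Sum>i<n. of_int (c i) * b i) | c::nat \<Rightarrow> int. True}"
  using assms unfolding nf_is_order_def by blast

lemma alg_dep:
  fixes x :: "'a::field_char_0"
  fixes b :: "nat \<Rightarrow> 'a"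
  assumes span: "\<forall>x. \<exists>c::nat \<Rightarrow> rat. x = (\<Sum>i<n. of_rat (c i) * b i)"
  shows "\<exists>q::nat\<Rightarrow>rat. (\<exists>i\<le>n. q i \<noteq> 0) \<and> (\<Sum>i\<le>n. of_rat (q i) * x^i) = 0"
proof -
  interpret V: vector_space "\<lambda>(q::rat) (y::'a). of_rat q * y"
    by unfold_locales (auto simp: algebra_simps of_rat_add of_rat_mult)
  show ?thesis
  proof (cases "inj_on (\<lambda>i. x^i) {..n}")
    case True
    define T where "T = (\<lambda>i. x^i) ` {..n}"
    define S where "S = b ` {..<n}"
    have TS: "T \<subseteq> V.span S"
    proof
      fix y assume "y \<in> T"
      obtain c where c: "y = (\<Sum>i<n. of_rat (c i) * b i)" using span by blast
      show "y \<in> V.span S" unfolding c S_def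
        by (intro V.span_sum V.span_scale V.span_base) auto
    qed
    have "card T = Suc n" unfolding T_def using True by (simp add: card_image)
    moreover have "card S \<le> n" unfolding S_def using card_image_le[of "{..<n}" b] by simp
    ultimately have "V.dependent T"
      using V.independent_span_bound[of S T] TS S_def by fastforce
    then obtain t u where t: "finite t" "t \<subseteq> T" "(\<Sum>v\<in>t. of_rat (u v) * v) = 0" "\<exists>v\<in>t. u v \<noteq> 0"
      unfolding V.dependent_explicit by blast
    define q where "q i = (if x^i \<in> t then u (x^i) else 0)" for i
    define N where "N = {i\<in>{..n}. x^i \<in> t}"
    have tN: "t = (\<lambda>i. x^i) ` N" using t(2) unfolding N_def T_def by auto
    have injN: "inj_on (\<lambda>i. x^i) N" using True unfolding N_def by (auto intro: inj_on_subset)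
    have "(\<Sum>i\<le>n. of_rat (q i) * x^i) = (\<Sum>i\<in>N. of_rat (q i) * x^i)"
      by (rule sum.mono_neutral_right) (auto simp: N_def q_def)
    also have "\<dots> = (\<Sum>i\<in>N. of_rat (u (x^i)) * x^i)" by (simp add: N_def q_def)
    also have "\<dots> = (\<Sum>v\<in>t. of_rat (u v) * v)" unfolding tN
      using sum.reindex[OF injN, of "\<lambda>v. of_rat (u v) * v"] by simp
    finally have "(\<Sum>i\<le>n. of_rat (q i) * x^i) = 0" using t(3) by simp
    moreover have "\<exists>i\<le>n. q i \<noteq> 0" using t(4) t(2) unfolding q_def T_def by auto
    ultimately show ?thesis by blast
  next
    case False
    then obtain i j where ij: "i \<le> n" "j \<le> n" "i \<noteq> j" "x^i = x^j"
      unfolding inj_on_def by auto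
    define q :: "nat \<Rightarrow> rat" where "q k = (if k = i then 1 else if k = j then -1 else 0)" for k
    have "(\<Sum>k\<le>n. of_rat (q k) * x^k) = (\<Sum>k\<le>n. (if k = i then x^k else 0) - (if k = j then x^k else 0))"
      by (rule sum.cong) (auto simp: q_def ij(3))
    also have "\<dots> = 0" using ij by (simp add: sum_subtractf)
    finally show ?thesis using ij by (intro exI[of _ q]) (auto simp: q_def)
  qed
qed

lemma emb_of_int: "nf_real_embedding \<rho> \<Longrightarrow> \<rho> (of_int k) = of_int k"
proof -
  assume e: "nf_real_embedding \<rho>"
  have add: "\<rho> (x + y) = \<rho> x + \<rho> y" for x y using e by (simp add: nf_real_embedding_def)
  have one: "\<rho> 1 = 1" using e by (simp add: nf_real_embedding_def)
  have z: "\<rho> 0 = 0" using add[of 0 0] by simp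
  have neg: "\<rho> (- x) = - \<rho> x" for x using add[of x "-x"] z by simp
  have nat: "\<rho> (of_nat m) = of_nat m" for m by (induction m) (auto simp: add one z)
  show ?thesis by (cases k rule: int_cases2) (auto simp: nat neg)
qed

lemma emb_basic:
  assumes e: "nf_real_embedding \<rho>"
  shows "\<rho> 0 = 0" "\<rho> 1 = 1" "\<rho> (x + y) = \<rho> x + \<rho> y" "\<rho> (x * y) = \<rho> x * \<rho> y"
    "\<rho> (- x) = - \<rho> x" "\<rho> (x - y) = \<rho> x - \<rho> y"
proof -
  show add: "\<rho> (x + y) = \<rho> x + \<rho> y" for x y using e by (simp add: nf_real_embedding_def)
  show "\<rho> 1 = 1" using e by (simp add: nf_real_embedding_def)
  show "\<rho> (x * y) = \<rho> x * \<rho> y" using e by (simp add: nf_real_embedding_def)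
  show z: "\<rho> 0 = 0" using add[of 0 0] by simp
  show neg: "\<rho> (- x) = - \<rho> x" for x using add[of x "-x"] z by simp
  show "\<rho> (x - y) = \<rho> x - \<rho> y" using add[of x "-y"] neg[of y] by simp
qed

lemma emb_mult: "nf_real_embedding \<rho> \<Longrightarrow> \<rho> (x * y) = \<rho> x * \<rho> y"
  by (simp add: nf_real_embedding_def)

lemma emb_nonzero: "nf_real_embedding \<rho> \<Longrightarrow> x \<noteq> 0 \<Longrightarrow> \<rho> x \<noteq> 0"
  using emb_mult[of \<rho> x "inverse x"] emb_basic(2)[of \<rho>] by auto

lemma emb_inverse: "nf_real_embedding \<rho> \<Longrightarrow> x \<noteq> 0 \<Longrightarrow> \<rho> (inverse x) = inverse (\<rho> x)"
  using emb_mult[of \<rho> x "inverse x"] emb_basic(2)[of \<rho>] emb_nonzero[of \<rho> x]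
  by (simp add: field_simps)

lemma emb_of_rat: "nf_real_embedding \<rho> \<Longrightarrow> \<rho> (of_rat q) = of_rat q"
proof -
  assume e: "nf_real_embedding \<rho>"
  obtain a b where q: "q = Fract a b" "b > 0" by (cases q) auto
  have "of_rat q = (of_int a :: 'a) * inverse (of_int b)" using q by (simp add: of_rat_rat divide_inverse)
  moreover have "of_rat q = (of_int a :: real) * inverse (of_int b)" using q by (simp add: of_rat_rat divide_inverse)
  ultimately show ?thesis using q emb_basic(4)[OF e] emb_inverse[OF e, of "of_int b"] emb_of_int[OF e]
    by simp
qed

lemma emb_sum: "nf_real_embedding \<rho> \<Longrightarrow> \<rho> (sum f A) = (\<Sum>a\<in>A. \<rho> (f a))"
  by (induction A rule: infinite_finite_induct) (auto simp: emb_basic)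

lemma emb_power: "nf_real_embedding \<rho> \<Longrightarrow> \<rho> (x ^ k) = \<rho> x ^ k"
  by (induction k) (auto simp: emb_basic)

lemma emb_vals_finite:
  fixes x :: "'a::field_char_0"
  assumes "nf_is_order (Oc::'a set)"
  shows "finite {\<rho> x | \<rho>. nf_real_embedding \<rho>}"
proof -
  obtain n and b :: "nat \<Rightarrow> 'a" where span: "\<forall>x. \<exists>c::nat \<Rightarrow> rat. x = (\<Sum>i<n. of_rat (c i) * b i)"
    using order_basis[OF assms] by metis
  obtain q where q: "\<exists>i\<le>n. q i \<noteq> 0" "(\<Sum>i\<le>n. of_rat (q i) * x^i) = 0"
    using alg_dep[OF span, of x] by blast
  have "finite {z::real. (\<Sum>i\<le>n. of_rat (q i) * z^i) = 0}"
  proof -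
    obtain i where "i \<le> n" "q i \<noteq> 0" using q(1) by blast
    thus ?thesis by (intro polyfun_roots_finite[of "\<lambda>i. of_rat (q i)" i]) auto
  qed
  moreover have "{\<rho> x | \<rho>. nf_real_embedding \<rho>} \<subseteq> {z::real. (\<Sum>i\<le>n. of_rat (q i) * z^i) = 0}"
  proof safe
    fix \<rho> :: "'a \<Rightarrow> real" assume e: "nf_real_embedding \<rho>"
    have "\<rho> (\<Sum>i\<le>n. of_rat (q i) * x^i) = 0" using q(2) emb_basic(1)[OF e] by simp
    thus "(\<Sum>i\<le>n. of_rat (q i) * \<rho> x^i) = 0"
      by (simp add: emb_sum[OF e] emb_basic(4)[OF e] emb_of_rat[OF e] emb_power[OF e])
  qed
  ultimately show ?thesis by (rule finite_subset[rotated])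
qed



definition subr :: "'a::field_char_0 set \<Rightarrow> bool" where
  "subr Oc \<longleftrightarrow> 1 \<in> Oc \<and> (\<forall>x\<in>Oc. \<forall>y\<in>Oc. x + y \<in> Oc \<and> x - y \<in> Oc \<and> x * y \<in> Oc)"

lemma order_subr: "nf_is_order Oc \<Longrightarrow> subr Oc"
  unfolding nf_is_order_def subr_def by blast

lemma subr_1: "subr Oc \<Longrightarrow> 1 \<in> Oc" by (simp add: subr_def)
lemma subr_add: "subr Oc \<Longrightarrow> x \<in> Oc \<Longrightarrow> y \<in> Oc \<Longrightarrow> x + y \<in> Oc" by (simp add: subr_def)
lemma subr_diff: "subr Oc \<Longrightarrow> x \<in> Oc \<Longrightarrow> y \<in> Oc \<Longrightarrow> x - y \<in> Oc" by (simp add: subr_def)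
lemma subr_mult: "subr Oc \<Longrightarrow> x \<in> Oc \<Longrightarrow> y \<in> Oc \<Longrightarrow> x * y \<in> Oc" by (simp add: subr_def)
lemma subr_0: "subr Oc \<Longrightarrow> 0 \<in> Oc" using subr_diff[of Oc 1 1] subr_1[of Oc] by simp
lemma subr_uminus: "subr Oc \<Longrightarrow> x \<in> Oc \<Longrightarrow> - x \<in> Oc" using subr_diff[of Oc 0 x] subr_0[of Oc] by simp
lemma subr_power: "subr Oc \<Longrightarrow> x \<in> Oc \<Longrightarrow> x ^ k \<in> Oc"
  by (induction k) (auto simp: subr_1 subr_mult)
lemma subr_sum: "subr Oc \<Longrightarrow> (\<And>i. i \<in> A \<Longrightarrow> f i \<in> Oc) \<Longrightarrow> sum f A \<in> Oc"
  by (induction A rule: infinite_finite_induct) (auto simp: subr_0 subr_add)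
lemma subr_of_nat: "subr Oc \<Longrightarrow> of_nat k \<in> Oc"
  by (induction k) (auto simp: subr_0 subr_add subr_1)
lemma subr_of_int: "subr Oc \<Longrightarrow> of_int k \<in> Oc"
  by (cases k rule: int_cases2) (auto simp: subr_of_nat subr_uminus)

lemma ideal_sub: "nf_integral_ideal Oc I \<Longrightarrow> x \<in> I \<Longrightarrow> x \<in> Oc"
  by (auto simp: nf_integral_ideal_def)
lemma ideal_0: "nf_integral_ideal Oc I \<Longrightarrow> 0 \<in> I"
  by (auto simp: nf_integral_ideal_def)
lemma ideal_add: "nf_integral_ideal Oc I \<Longrightarrow> x \<in> I \<Longrightarrow> y \<in> I \<Longrightarrow> x + y \<in> I"
  by (auto simp: nf_integral_ideal_def)
lemma ideal_lmult: "nf_integral_ideal Oc I \<Longrightarrow> r \<in> Oc \<Longrightarrow> x \<in> I \<Longrightarrow> r * x \<in> I"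
  by (auto simp: nf_integral_ideal_def)
lemma ideal_rmult: "nf_integral_ideal Oc I \<Longrightarrow> r \<in> Oc \<Longrightarrow> x \<in> I \<Longrightarrow> x * r \<in> I"
  using ideal_lmult[of Oc I r x] by (simp add: mult.commute)
lemma ideal_uminus: "subr Oc \<Longrightarrow> nf_integral_ideal Oc I \<Longrightarrow> x \<in> I \<Longrightarrow> - x \<in> I"
  using ideal_lmult[of Oc I "-1" x] subr_uminus[OF _ subr_1] by auto
lemma ideal_diff: "subr Oc \<Longrightarrow> nf_integral_ideal Oc I \<Longrightarrow> x \<in> I \<Longrightarrow> y \<in> I \<Longrightarrow> x - y \<in> I"
  using ideal_add[of Oc I x "-y"] ideal_uminus[of Oc I y] by simp
lemma ideal_sum: "nf_integral_ideal Oc I \<Longrightarrow> (\<And>i. i \<in> A \<Longrightarrow> f i \<in> I) \<Longrightarrow> sum f A \<in> I"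
  by (induction A rule: infinite_finite_induct) (auto simp: ideal_0 ideal_add)

lemma common_denom:
  fixes q :: "nat \<Rightarrow> rat"
  shows "\<exists>L::int. L > 0 \<and> (\<forall>i\<le>n. q i * of_int L \<in> \<int>)"
proof -
  define L where "L = (\<Prod>i\<le>n. snd (quotient_of (q i)))"
  have pos: "snd (quotient_of (q i)) > 0" for i using quotient_of_denom_pos' by blast
  have "L > 0" unfolding L_def using pos by (intro prod_pos) auto
  moreover have "q i * of_int L \<in> \<int>" if "i \<le> n" for i
  proof -
    have "L = snd (quotient_of (q i)) * (\<Prod>j\<in>{..n}-{i}. snd (quotient_of (q j)))"
      unfolding L_def using that by (subst prod.remove[of _ i]) auto
    moreover have "q i * of_int (snd (quotient_of (q i))) \<in> \<int>"
    proof -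
      obtain a b where ab: "quotient_of (q i) = (a, b)" by fastforce
      have "q i = of_int a / of_int b" using quotient_of_div[OF ab] .
      moreover have "b > 0" using ab pos[of i] by simp
      ultimately have "q i * of_int b = of_int a" by simp
      thus ?thesis using ab by simp
    qed
    ultimately show ?thesis by (simp add: mult.assoc[symmetric] Ints_mult Ints_prod)
  qed
  ultimately show ?thesis by blast
qed

lemma int_in_ideal:
  assumes ord: "nf_is_order Oc" and I: "nf_integral_ideal Oc I" and nz: "I \<noteq> {0}"
  shows "\<exists>c::int. c > 0 \<and> of_int c \<in> I"
proof -
  have R: "subr Oc" using ord by (rule order_subr)
  obtain d where d: "d \<in> I" "d \<noteq> 0" using nz ideal_0[OF I] by blast
  have dO: "d \<in> Oc" using ideal_sub[OF I d(1)] .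
  obtain n and b :: "nat \<Rightarrow> 'a" where span: "\<forall>x. \<exists>c::nat \<Rightarrow> rat. x = (\<Sum>i<n. of_rat (c i) * b i)"
    using order_basis[OF ord] by metis
  obtain q where q: "\<exists>i\<le>n. q i \<noteq> 0" "(\<Sum>i\<le>n. of_rat (q i) * d^i) = 0"
    using alg_dep[OF span, of d] by blast
  obtain L :: int where L: "L > 0" "\<forall>i\<le>n. q i * of_int L \<in> \<int>" using common_denom by blast
  define a where "a i = (THE z::int. q i * of_int L = of_int z)" for i
  have a: "q i * of_int L = of_int (a i)" if hi: "i \<le> n" for i
  proof -
    have "q i * of_int L \<in> \<int>" using L(2) hi by blast
    then obtain z :: int where zz: "q i * of_int L = of_int z" by (meson Ints_cases)
    have "(THE z::int. q i * of_int L = of_int z) = z" using zz by (intro the_equality) auto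
    thus ?thesis unfolding a_def using zz by simp
  qed
  have rel: "(\<Sum>i\<le>n. of_int (a i) * d^i) = 0"
  proof -
    have "(\<Sum>i\<le>n. of_int (a i) * d^i) = (\<Sum>i\<le>n. of_rat (q i * of_int L) * d^i)"
      by (rule sum.cong) (auto simp: a simp del: of_rat_mult)
    also have "\<dots> = of_int L * (\<Sum>i\<le>n. of_rat (q i) * d^i)"
      by (simp add: sum_distrib_left of_rat_mult algebra_simps)
    finally show ?thesis using q(2) by simp
  qed
  have ex: "\<exists>i. i \<le> n \<and> a i \<noteq> 0"
  proof -
    obtain i where i: "i \<le> n" "q i \<noteq> 0" using q(1) by blast
    hence "q i * of_int L \<noteq> 0" using L(1) by simp
    hence "a i \<noteq> 0" using a[OF i(1)] by simp
    thus ?thesis using i(1) by blast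
  qed
  define k where "k = (LEAST i. i \<le> n \<and> a i \<noteq> 0)"
  have k: "k \<le> n" "a k \<noteq> 0" using LeastI_ex[OF ex] unfolding k_def by auto
  have below: "a i = 0" if "i < k" for i using not_less_Least[of i "\<lambda>i. i \<le> n \<and> a i \<noteq> 0"] that k(1)
    unfolding k_def by auto
  define w where "w = (\<Sum>i\<in>{k<..n}. of_int (a i) * d^(i - k - 1))"
  have "(\<Sum>i\<le>n. of_int (a i) * d^i) = (\<Sum>i\<in>{k..n}. of_int (a i) * d^i)"
    by (rule sum.mono_neutral_right) (auto simp: below)
  also have "{k..n} = insert k {k<..n}" using k(1) by auto
  also have "(\<Sum>i\<in>insert k {k<..n}. of_int (a i) * d^i) = of_int (a k) * d^k + (\<Sum>i\<in>{k<..n}. of_int (a i) * d^i)"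
    by simp
  also have "(\<Sum>i\<in>{k<..n}. of_int (a i) * d^i) = d^k * d * w"
    unfolding w_def sum_distrib_left
  proof (rule sum.cong)
    fix i assume "i \<in> {k<..n}"
    hence e: "i = Suc k + (i - Suc k)" by simp
    have "d^i = d^(Suc k + (i - Suc k))" using e by simp
    also have "\<dots> = d^k * d * d^(i - Suc k)" by (simp only: power_add power_Suc2)
    finally have "d^i = d^k * d * d^(i-k-1)" by simp
    thus "of_int (a i) * d^i = d^k * d * (of_int (a i) * d^(i-k-1))" by simp
  qed simp
  finally have "d^k * (of_int (a k) + d * w) = 0" using rel by (simp add: algebra_simps)
  hence h0: "of_int (a k) + d * w = 0" using d(2) by simp
  have "of_int (a k) = (of_int (a k) + d * w) - d * w" by simp
  hence "of_int (a k) = d * (- w)" using h0 by simp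
  moreover have "- w \<in> Oc" unfolding w_def
    by (intro subr_uminus[OF R] subr_sum[OF R] subr_mult[OF R] subr_of_int[OF R] subr_power[OF R dO])
  ultimately have akI: "of_int (a k) \<in> I" using ideal_rmult[OF I _ d(1), of "- w"] by (simp only:)
  show ?thesis
  proof (cases "a k > 0")
    case True thus ?thesis using akI by blast
  next
    case False
    hence "- a k > 0" using k(2) by simp
    moreover have "of_int (- a k) \<in> I" using ideal_uminus[OF R I akI] by simp
    ultimately show ?thesis by blast
  qed
qed

lemma ideal_pigeon:
  fixes f :: "nat \<Rightarrow> 'a::field_char_0"
  assumes ord: "nf_is_order Oc" and I: "nf_integral_ideal Oc I" and nz: "I \<noteq> {0}"
    and f: "\<And>k. f k \<in> Oc"
  shows "\<exists>i j. i < j \<and> f i - f j \<in> I"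
proof -
  have R: "subr Oc" using ord by (rule order_subr)
  obtain c :: int where c: "c > 0" "of_int c \<in> I" using int_in_ideal[OF assms(1-3)] by blast
  obtain n and b :: "nat \<Rightarrow> 'a" where Oeq: "Oc = {(\<Sum>i<n. of_int (cf i) * b i) | cf::nat \<Rightarrow> int. True}"
    using order_basis_O[OF ord] by blast
  define Rs where "Rs = (\<lambda>k. \<Sum>i<n. of_int (k i) * b i) ` ({..<n} \<rightarrow>\<^sub>E {0..<c})"
  have finR: "finite Rs" unfolding Rs_def by (intro finite_imageI finite_PiE) auto
  have rep: "\<exists>y\<in>Rs. x - y \<in> I" if xO: "x \<in> Oc" for x
  proof -
    obtain cf where x: "x = (\<Sum>i<n. of_int (cf i) * b i)" using xO Oeq by blast
    define k where "k = restrict (\<lambda>i. cf i mod c) {..<n}"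
    have kP: "k \<in> {..<n} \<rightarrow>\<^sub>E {0..<c}" unfolding k_def using c(1) by auto
    define y where "y = (\<Sum>i<n. of_int (k i) * b i)"
    have yR: "y \<in> Rs" unfolding Rs_def y_def using kP by blast
    have "x - y = (\<Sum>i<n. of_int c * (of_int (cf i div c) * b i))"
      unfolding x y_def sum_subtractf[symmetric]
    proof (rule sum.cong)
      fix i assume "i \<in> {..<n}"
      hence "k i = cf i mod c" by (simp add: k_def)
      moreover have "cf i = c * (cf i div c) + cf i mod c" by simp
      ultimately have e: "cf i = c * (cf i div c) + k i" by simp
      have "of_int (cf i) = (of_int (c * (cf i div c) + k i) :: 'a)" using arg_cong[OF e, of "of_int :: int \<Rightarrow> 'a"] .
      hence "of_int (cf i) = (of_int c * of_int (cf i div c) + of_int (k i) :: 'a)"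
        by (simp only: of_int_add of_int_mult)
      thus "of_int (cf i) * b i - of_int (k i) * b i = of_int c * (of_int (cf i div c) * b i)"
        by (simp add: algebra_simps)
    qed simp
    also have "\<dots> = of_int c * (\<Sum>i<n. of_int (cf i div c) * b i)" by (simp add: sum_distrib_left)
    also have "\<dots> \<in> I"
    proof (rule ideal_rmult[OF I _ c(2)])
      show "(\<Sum>i<n. of_int (cf i div c) * b i) \<in> Oc" by (subst Oeq) (rule CollectI, rule exI[of _ "\<lambda>i. cf i div c"], simp)
    qed
    finally show ?thesis using yR by blast
  qed
  define g where "g k = (SOME y. y \<in> Rs \<and> f k - y \<in> I)" for k
  have g: "g k \<in> Rs \<and> f k - g k \<in> I" for k unfolding g_def by (rule someI_ex) (use rep[OF f[of k]] in blast)
  have "\<not> inj g"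
  proof
    assume "inj g"
    hence "infinite (range g)" using finite_imageD infinite_UNIV_nat by blast
    moreover have "range g \<subseteq> Rs" using g by blast
    ultimately show False using finR finite_subset by blast
  qed
  then obtain i j where ij: "i \<noteq> j" "g i = g j" unfolding inj_def by blast
  have "f i - f j = (f i - g i) - (f j - g j)" using ij(2) by simp
  also have "\<dots> \<in> I" by (rule ideal_diff[OF R I]) (use g in auto)
  finally have d1: "f i - f j \<in> I" .
  hence d2: "f j - f i \<in> I" using ideal_uminus[OF R I d1] by simp
  show ?thesis
  proof (cases "i < j")
    case True thus ?thesis using d1 by blast
  next
    case False
    hence "j < i" using ij(1) by simp
    thus ?thesis using d2 by blast
  qed
qed



definition cg :: "'a::field_char_0 set \<Rightarrow> 'a \<Rightarrow> 'a \<Rightarrow> bool" where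
  "cg E a b \<longleftrightarrow> a - b \<in> E"

locale cgl =
  fixes Oc E :: "'a::field_char_0 set"
  assumes R: "subr Oc" and E: "nf_integral_ideal Oc E"
begin

lemma cg_refl[simp]: "cg E a a" unfolding cg_def using ideal_0[OF E] by simp
lemma cg_eq: "a = b \<Longrightarrow> cg E a b" by simp
lemma cg_sym: "cg E a b \<Longrightarrow> cg E b a" unfolding cg_def using ideal_uminus[OF R E, of "a - b"] by simp
lemma cg_trans[trans]: "cg E a b \<Longrightarrow> cg E b c \<Longrightarrow> cg E a c"
  unfolding cg_def using ideal_add[OF E, of "a - b" "b - c"] by simp
lemma cg_add: "cg E a b \<Longrightarrow> cg E c d \<Longrightarrow> cg E (a + c) (b + d)"
  unfolding cg_def using ideal_add[OF E, of "a - b" "c - d"] by (simp add: algebra_simps)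
lemma cg_diff: "cg E a b \<Longrightarrow> cg E c d \<Longrightarrow> cg E (a - c) (b - d)"
  unfolding cg_def using ideal_diff[OF R E, of "a - b" "c - d"] by (simp add: algebra_simps)
lemma cg_lmult: "c \<in> Oc \<Longrightarrow> cg E a b \<Longrightarrow> cg E (c * a) (c * b)"
  unfolding cg_def using ideal_lmult[OF E, of c "a - b"] by (simp add: algebra_simps)
lemma cg_rmult: "c \<in> Oc \<Longrightarrow> cg E a b \<Longrightarrow> cg E (a * c) (b * c)"
  using cg_lmult[of c a b] by (simp add: mult.commute)
lemma cg_mult: "a \<in> Oc \<Longrightarrow> d \<in> Oc \<Longrightarrow> cg E a b \<Longrightarrow> cg E c d \<Longrightarrow> cg E (a * c) (b * d)"
  using cg_trans[OF cg_lmult[of a c d] cg_rmult[of d a b]] by simp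
lemma cg_0: "x \<in> E \<Longrightarrow> cg E x 0" unfolding cg_def by simp
lemma cg_0': "x \<in> E \<Longrightarrow> c \<in> Oc \<Longrightarrow> cg E (c * x) 0" unfolding cg_def using ideal_lmult[OF E] by simp
lemma cg_pow: "a \<in> Oc \<Longrightarrow> b \<in> Oc \<Longrightarrow> cg E a b \<Longrightarrow> cg E (a ^ m) (b ^ m)"
  by (induction m) (auto intro: cg_mult subr_power[OF R])
lemma cg_sum: "(\<And>i. i \<in> A \<Longrightarrow> cg E (f i) (g i)) \<Longrightarrow> cg E (sum f A) (sum g A)"
  by (induction A rule: infinite_finite_induct) (auto intro: cg_add)

lemma idem_pow: "g \<in> Oc \<Longrightarrow> cg E (g * g) g \<Longrightarrow> m \<ge> 1 \<Longrightarrow> cg E (g ^ m) g"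
proof (induction m)
  case (Suc m)
  show ?case
  proof (cases "m = 0")
    case False
    hence "cg E (g ^ m) g" using Suc by simp
    hence "cg E (g * g ^ m) (g * g)" using Suc(2) by (intro cg_lmult)
    also have "cg E (g * g) g" using Suc(3) .
    finally show ?thesis by simp
  qed simp
qed simp

end

lemma cgl_mono: "cgl Oc E \<Longrightarrow> E \<subseteq> F \<Longrightarrow> cg E a b \<Longrightarrow> cg F a b"
  unfolding cg_def by blast

lemma idem_exists:
  assumes ord: "nf_is_order Oc" and E: "nf_integral_ideal Oc E" and nz: "E \<noteq> {0}" and r: "r \<in> Oc"
  shows "\<exists>m\<ge>1. cg E (r^m * r^m) (r^m)"
proof -
  interpret cgl Oc E using order_subr[OF ord] E by unfold_locales
  obtain i j where ij: "i < j" "r^i - r^j \<in> E"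
    using ideal_pigeon[OF ord E nz, of "\<lambda>k. r^k"] subr_power[OF R r] by blast
  define p where "p = j - i"
  have p: "p > 0" "j = i + p" using ij(1) unfolding p_def by auto
  have rp: "cg E (r^(i + p)) (r^i)" using ij(2) p(2) cg_sym unfolding cg_def by blast
  have step: "cg E (r^(t + s*p)) (r^t)" if "t \<ge> i" for t s
  proof (induction s)
    case (Suc s)
    have e: "t + Suc s * p = (t + s*p - i) + (i + p)" using that by simp
    have "r^(t + Suc s * p) = r^(t + s*p - i) * r^(i+p)" unfolding e power_add ..
    also have "cg E \<dots> (r^(t + s*p - i) * r^i)" by (intro cg_lmult rp subr_power[OF R r])
    also have "r^(t + s*p - i) * r^i = r^(t + s*p)" using that by (simp add: power_add[symmetric])
    also have "cg E \<dots> (r^t)" using Suc .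
    finally show ?case .
  qed simp
  define m where "m = p + i * p"
  have "i * 1 \<le> i * p" using p(1) by (intro mult_le_mono2) simp
  hence m: "m \<ge> 1" "m \<ge> i" using p(1) unfolding m_def by linarith+
  have "r^m * r^m = r^(m + (i+1)*p)" by (simp add: m_def power_add[symmetric] algebra_simps)
  also have "cg E \<dots> (r^m)" using step[OF m(2)] .
  finally show ?thesis using m(1) by blast
qed



lemma unit_lift:
  assumes ord: "nf_is_order Oc" and D: "nf_integral_ideal Oc D" and nz: "D \<noteq> {0}"
    and M: "nf_integral_ideal Oc M" and DM: "D \<subseteq> M"
    and v: "v \<in> Oc" and w: "w \<in> Oc" and vw: "cg M (v * w) 1"
  shows "\<exists>u\<in>Oc. \<exists>u'\<in>Oc. cg M u v \<and> cg D (u * u') 1"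
proof -
  have R: "subr Oc" using ord by (rule order_subr)
  interpret d: cgl Oc D using R D by unfold_locales
  interpret m: cgl Oc M using R M by unfold_locales
  obtain m where m: "m \<ge> 1" "cg D (v^m * v^m) (v^m)" using idem_exists[OF ord D nz v] by blast
  define e where "e = v^m"
  define t where "t = v^(m-1)"
  have et: "e = v * t" unfolding e_def t_def using m(1) by (metis Suc_diff_1 less_le_trans power_Suc zero_less_one)
  have eO: "e \<in> Oc" and tO: "t \<in> Oc" unfolding e_def t_def using subr_power[OF R v] by auto
  define eps where "eps = e * e - e"
  have epsD: "eps \<in> D" using m(2) unfolding eps_def e_def cg_def .
  define u where "u = v * e + 1 - e"
  define u' where "u' = t * e + 1 - e"
  have uO: "u \<in> Oc" "u' \<in> Oc" unfolding u_def u'_def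
    using eO tO v R by (auto intro!: subr_add subr_diff subr_mult subr_1)
  have "u * u' - 1 = eps * (2 + e - v - t)" unfolding u_def u'_def eps_def et by algebra
  moreover have "2 + e - v - t \<in> Oc" using eO tO v R subr_1[OF R]
    by (metis one_add_one subr_add subr_diff)
  ultimately have uu: "cg D (u * u') 1" unfolding cg_def using ideal_rmult[OF D _ epsD] by simp
  have "cg M ((v*w)^m) (1^m)" using vw by (intro m.cg_pow subr_mult[OF R v w] subr_1[OF R])
  hence vwm: "1 - (v*w)^m \<in> M" unfolding cg_def using ideal_uminus[OF R M] by fastforce
  have "1 - e = (1 - e) * (1 - (v*w)^m) - w^m * eps"
    unfolding eps_def e_def by (simp add: power_mult_distrib algebra_simps)
  moreover have "(1 - e) * (1 - (v*w)^m) \<in> M" using vwm eO R subr_1[OF R]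
    by (intro ideal_lmult[OF M]) (auto intro: subr_diff)
  moreover have "w^m * eps \<in> M" using epsD DM subr_power[OF R w] by (intro ideal_lmult[OF M]) auto
  ultimately have eM: "1 - e \<in> M" using ideal_diff[OF R M] by metis
  have "u - v = (1 - v) * (1 - e)" unfolding u_def by algebra
  hence "cg M u v" unfolding cg_def using ideal_lmult[OF M _ eM, of "1 - v"] v R subr_1[OF R]
    by (simp add: subr_diff)
  thus ?thesis using uu uO by blast
qed

lemma gen_idem:
  fixes Oc D X Y :: "'a::field_char_0 set" and k :: nat and x y :: "nat \<Rightarrow> 'a"
  assumes ord: "nf_is_order Oc" and D: "nf_integral_ideal Oc D" and nz: "D \<noteq> {0}"
    and X0: "0 \<in> X" and Xadd: "\<And>a b. a \<in> X \<Longrightarrow> b \<in> X \<Longrightarrow> a + b \<in> X"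
    and Xmul: "\<And>r a. r \<in> Oc \<Longrightarrow> a \<in> X \<Longrightarrow> r * a \<in> X"
    and Y0: "0 \<in> Y" and Yadd: "\<And>a b. a \<in> Y \<Longrightarrow> b \<in> Y \<Longrightarrow> a + b \<in> Y"
    and Ymul: "\<And>r a. r \<in> Oc \<Longrightarrow> a \<in> Y \<Longrightarrow> a * r \<in> Y"
    and XY: "\<And>a b. a \<in> X \<Longrightarrow> b \<in> Y \<Longrightarrow> a * b \<in> Oc"
  shows "g \<in> Oc \<Longrightarrow> cg D (g * g) g \<Longrightarrow> (\<forall>i<k. x i \<in> X \<and> y i \<in> Y) \<Longrightarrow>
     cg D (\<Sum>i<k. x i * y i) g \<Longrightarrow> \<exists>a\<in>X. \<exists>b\<in>Y. cg D (a * b) g"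
proof (induction k arbitrary: g y)
  case 0
  have "cg D (0 * 0) g" using 0(4) cgl.cg_sym[of Oc D] order_subr[OF ord] D
    by (simp add: cgl_def)
  thus ?case using X0 Y0 by blast
next
  case (Suc k)
  have R: "subr Oc" using ord by (rule order_subr)
  interpret cgl Oc D using R D by unfold_locales
  note g = Suc.prems(1) and gg = Suc.prems(2) and xy = Suc.prems(3) and S = Suc.prems(4)
  define y' where "y' i = y i * g" for i
  have y'Y: "y' i \<in> Y" if "i < Suc k" for i unfolding y'_def using xy that g Ymul by blast
  define S' where "S' = (\<Sum>i<Suc k. x i * y' i)"
  have S'eq: "S' = (\<Sum>i<Suc k. x i * y i) * g" unfolding S'_def y'_def sum_distrib_right
    by (simp add: mult.assoc)
  have "cg D S' (g * g)" unfolding S'eq by (intro cg_rmult g S)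
  also have "cg D (g * g) g" by (rule gg)
  finally have S'g: "cg D S' g" .
  define r where "r = x k * y' k"
  have xkO: "x k * y k \<in> Oc" using xy XY by blast
  have rO: "r \<in> Oc" unfolding r_def using xy y'Y XY by blast
  obtain m where m: "m \<ge> 1" "cg D (r^m * r^m) (r^m)" using idem_exists[OF ord D nz rO] by blast
  define e where "e = r^m"
  have eO: "e \<in> Oc" unfolding e_def using subr_power[OF R rO] .
  have ee: "cg D (e * e) e" using m(2) unfolding e_def .
  have rg: "cg D (r * g) r"
  proof -
    have "r * g = (x k * y k) * (g * g)" "r = (x k * y k) * g" unfolding r_def y'_def by (simp_all add: algebra_simps)
    thus ?thesis using cg_lmult[OF xkO gg] by (simp add: mult.assoc)
  qed
  have em: "e = r^(m-1) * r" unfolding e_def using m(1)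
    by (metis Suc_diff_1 less_le_trans power_Suc2 zero_less_one)
  have eg: "cg D (e * g) e"
  proof -
    have "e * g = r^(m-1) * (r * g)" unfolding em by (simp add: algebra_simps)
    also have "cg D \<dots> (r^(m-1) * r)" by (intro cg_lmult rg subr_power[OF R rO])
    finally show ?thesis unfolding em .
  qed
  define h where "h = g - e"
  have hO: "h \<in> Oc" unfolding h_def using subr_diff[OF R g eO] .
  have hh: "cg D (h * h) h"
  proof -
    have "h * h = g * g - e * g - e * g + e * e" unfolding h_def by algebra
    also have "cg D \<dots> (g - e - e + e)" by (intro cg_add cg_diff gg eg ee)
    also have "g - e - e + e = h" unfolding h_def by simp
    finally show ?thesis .
  qed
  have gh: "cg D (g * h) h"
  proof -
    have "g * h = g * g - e * g" unfolding h_def by algebra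
    also have "cg D \<dots> (g - e)" by (intro cg_diff gg eg)
    finally show ?thesis unfolding h_def .
  qed
  have eh: "cg D (e * h) 0"
  proof -
    have "e * h = e * g - e * e" unfolding h_def by algebra
    also have "cg D \<dots> (e - e)" by (intro cg_diff ee eg)
    finally show ?thesis by simp
  qed
  define z where "z = r * h"
  have zO: "z \<in> Oc" unfolding z_def using subr_mult[OF R rO hO] .
  have zm: "cg D (z^m) 0"
  proof -
    have "z^m = e * h^m" unfolding z_def e_def by (simp add: power_mult_distrib)
    also have "cg D \<dots> (e * h)" by (intro cg_lmult eO idem_pow hO hh m(1))
    also have "cg D \<dots> 0" by (rule eh)
    finally show ?thesis .
  qed
  define w where "w = (\<Sum>j<m. z^j)"
  have wO: "w \<in> Oc" unfolding w_def by (intro subr_sum[OF R] subr_power[OF R zO])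
  have zw: "(1 - z) * w = 1 - z^m"
  proof -
    have "(1 - z) * w = - ((z - 1) * w)" by (simp add: algebra_simps)
    also have "(z - 1) * w = z^m - 1" unfolding w_def using power_diff_1_eq[of z m] by simp
    finally show ?thesis by simp
  qed
  define y'' where "y'' i = y' i * (h * w)" for i
  have y''Y: "\<forall>i<k. x i \<in> X \<and> y'' i \<in> Y" unfolding y''_def using xy y'Y Ymul subr_mult[OF R hO wO] by simp
  have T: "cg D (\<Sum>i<k. x i * y'' i) h"
  proof -
    have "(\<Sum>i<k. x i * y'' i) = (\<Sum>i<k. x i * y' i) * (h * w)"
      unfolding y''_def sum_distrib_right by (simp add: mult.assoc)
    also have "(\<Sum>i<k. x i * y' i) = S' - r" unfolding S'_def r_def by simp
    also have "(S' - r) * (h * w) = (S' * h - r * h) * w" by algebra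
    also have "cg D \<dots> ((g * h - z) * w)" unfolding z_def
      by (intro cg_rmult wO cg_diff cg_rmult[OF hO S'g] cg_refl)
    also have "cg D \<dots> ((h - z) * w)" by (intro cg_rmult wO cg_diff gh cg_refl)
    also have "(h - z) * w = (h - r * h) * w" unfolding z_def ..
    also have "cg D ((h - r * h) * w) ((h - r * (h * h)) * w)"
      by (intro cg_rmult wO cg_diff cg_refl cg_lmult rO cg_sym[OF hh])
    also have "(h - r * (h * h)) * w = h * ((1 - z) * w)" unfolding z_def by algebra
    also have "\<dots> = h - h * z^m" unfolding zw by algebra
    also have "cg D \<dots> (h - h * 0)" by (intro cg_diff cg_refl cg_lmult hO zm)
    finally show ?thesis by simp
  qed
  obtain a' b' where ab': "a' \<in> X" "b' \<in> Y" "cg D (a' * b') h"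
    using Suc.IH[OF hO hh y''Y T] by blast
  define a where "a = e * x k + h * a'"
  define b where "b = y' k * r^(m-1) * e + b' * h"
  have aX: "a \<in> X" unfolding a_def using Xadd Xmul eO hO xy ab'(1) by simp
  have bY: "b \<in> Y" unfolding b_def using Yadd Ymul eO hO y'Y ab'(2) subr_power[OF R rO]
    by (simp add: subr_mult[OF R])
  have q: "x k * b' + a' * (y' k * r^(m-1)) \<in> Oc"
  proof -
    have q1: "x k * b' \<in> Oc" using XY xy ab'(2) by auto
    have q2: "a' * y' k \<in> Oc" using XY ab'(1) y'Y by auto
    have "a' * (y' k * r^(m-1)) = (a' * y' k) * r^(m-1)" by (simp add: mult.assoc)
    thus ?thesis using subr_add[OF R q1 subr_mult[OF R q2 subr_power[OF R rO, of "m-1"]]] by (simp only:)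
  qed
  have "a * b = e * e * (x k * y' k * r^(m-1)) + (e * h) * (x k * b' + a' * (y' k * r^(m-1))) + h * h * (a' * b')"
    unfolding a_def b_def by algebra
  also have "x k * y' k * r^(m-1) = e" unfolding em r_def by (simp add: mult.commute)
  also have "cg D (e * e * e + (e * h) * (x k * b' + a' * (y' k * r^(m-1))) + h * h * (a' * b'))
      (e + 0 * (x k * b' + a' * (y' k * r^(m-1))) + h)"
  proof (intro cg_add)
    have "cg D (e * e * e) (e * e)" using cg_lmult[OF eO ee] by (simp add: mult.assoc)
    thus "cg D (e * e * e) e" using ee cg_trans by blast
    show "cg D (e * h * (x k * b' + a' * (y' k * r ^ (m - 1)))) (0 * (x k * b' + a' * (y' k * r ^ (m - 1))))"
      by (intro cg_rmult q eh)
    have "cg D (h * h * (a' * b')) (h * h * h)" by (intro cg_lmult subr_mult[OF R hO hO] ab'(3))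
    also have "cg D (h * h * h) (h * h)" using cg_lmult[OF hO hh] by (simp add: mult.assoc mult.commute)
    also have "cg D (h * h) h" by (rule hh)
    finally show "cg D (h * h * (a' * b')) h" .
  qed
  also have "e + 0 * (x k * b' + a' * (y' k * r^(m-1))) + h = g" unfolding h_def by simp
  finally show ?case using aX bY by blast
qed



section \<open>Ideal multiplication\<close>

lemma imult_induct:
  fixes A B :: "'a::field_char_0 set"
  assumes z: "z \<in> nf_ideal_mult A B" and P0: "P 0"
    and Pab: "\<And>a b. a \<in> A \<Longrightarrow> b \<in> B \<Longrightarrow> P (a * b)"
    and Padd: "\<And>u v. P u \<Longrightarrow> P v \<Longrightarrow> P (u + v)"
  shows "P z"
proof -
  obtain n and a b :: "nat \<Rightarrow> 'a" where zn: "z = (\<Sum>i<n. a i * b i)" and ab: "\<forall>i<n. a i \<in> A \<and> b i \<in> B"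
    using z unfolding nf_ideal_mult_def by blast
  have "P (\<Sum>i<m. a i * b i)" if "m \<le> n" for m
    using that
  proof (induction m)
    case (Suc m)
    thus ?case using Padd Pab ab by simp
  qed (simp add: P0)
  thus ?thesis using zn by simp
qed

lemma imult_0: "0 \<in> nf_ideal_mult A B"
  unfolding nf_ideal_mult_def by (rule CollectI, rule exI[of _ 0]) simp

lemma imult_prod: "a \<in> A \<Longrightarrow> b \<in> B \<Longrightarrow> a * b \<in> nf_ideal_mult A B"
  unfolding nf_ideal_mult_def
  by (rule CollectI, rule exI[of _ 1], rule exI[of _ "\<lambda>_. a"], rule exI[of _ "\<lambda>_. b"]) simp

lemma imult_add1:
  fixes A B :: "'a::field_char_0 set"
  assumes u: "u \<in> nf_ideal_mult A B" and a: "a0 \<in> A" and b: "b0 \<in> B"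
  shows "u + a0 * b0 \<in> nf_ideal_mult A B"
proof -
  obtain n and a b :: "nat \<Rightarrow> 'a" where zn: "u = (\<Sum>i<n. a i * b i)" and ab: "\<forall>i<n. a i \<in> A \<and> b i \<in> B"
    using u unfolding nf_ideal_mult_def by blast
  define a' where "a' = a(n := a0)"
  define b' where "b' = b(n := b0)"
  have "(\<Sum>i<Suc n. a' i * b' i) = u + a0 * b0" unfolding zn a'_def b'_def by simp
  moreover have "\<forall>i<Suc n. a' i \<in> A \<and> b' i \<in> B" using ab a b unfolding a'_def b'_def
    by (simp add: less_Suc_eq)
  ultimately show ?thesis unfolding nf_ideal_mult_def
    by (intro CollectI exI[of _ "Suc n"] exI[of _ a'] exI[of _ b']) simp
qed

lemma imult_add:
  assumes u: "u \<in> nf_ideal_mult A B" and v: "v \<in> nf_ideal_mult A B"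
  shows "u + v \<in> nf_ideal_mult A B"
proof -
  have "\<forall>u. u \<in> nf_ideal_mult A B \<longrightarrow> u + v \<in> nf_ideal_mult A B"
    using v
  proof (rule imult_induct)
    show "\<forall>u. u \<in> nf_ideal_mult A B \<longrightarrow> u + 0 \<in> nf_ideal_mult A B" by simp
    show "\<forall>u. u \<in> nf_ideal_mult A B \<longrightarrow> u + a * b \<in> nf_ideal_mult A B" if "a \<in> A" "b \<in> B" for a b
      using imult_add1 that by blast
    show "\<forall>w. w \<in> nf_ideal_mult A B \<longrightarrow> w + (u + v) \<in> nf_ideal_mult A B"
      if "\<forall>w. w \<in> nf_ideal_mult A B \<longrightarrow> w + u \<in> nf_ideal_mult A B"
         "\<forall>w. w \<in> nf_ideal_mult A B \<longrightarrow> w + v \<in> nf_ideal_mult A B" for u v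
      using that by (metis add.assoc)
  qed
  thus ?thesis using u by blast
qed

lemma imult_min:
  assumes "0 \<in> S" "\<And>u v. u \<in> S \<Longrightarrow> v \<in> S \<Longrightarrow> u + v \<in> S" "\<And>a b. a \<in> A \<Longrightarrow> b \<in> B \<Longrightarrow> a * b \<in> S"
  shows "nf_ideal_mult A B \<subseteq> S"
  using assms by (auto elim: imult_induct)

lemma imult_comm: "nf_ideal_mult A B = nf_ideal_mult B A"
proof -
  have "nf_ideal_mult X Y \<subseteq> nf_ideal_mult Y X" for X Y :: "'a set"
  proof (rule imult_min)
    fix a b assume "a \<in> X" "b \<in> Y"
    thus "a * b \<in> nf_ideal_mult Y X" using imult_prod[of b Y a X] by (simp add: mult.commute)
  qed (auto intro: imult_0 imult_add)
  thus ?thesis by blast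
qed

lemma imult_mono: "A \<subseteq> A' \<Longrightarrow> B \<subseteq> B' \<Longrightarrow> nf_ideal_mult A B \<subseteq> nf_ideal_mult A' B'"
  by (rule imult_min) (auto intro: imult_0 imult_add imult_prod)

lemma imult_assoc1: "nf_ideal_mult (nf_ideal_mult A B) C \<subseteq> nf_ideal_mult A (nf_ideal_mult B C)"
proof (rule imult_min)
  fix u c assume u: "u \<in> nf_ideal_mult A B" and c: "c \<in> C"
  show "u * c \<in> nf_ideal_mult A (nf_ideal_mult B C)"
    using u by (rule imult_induct) (auto intro: imult_0 imult_add imult_prod c simp: distrib_right mult.assoc)
qed (auto intro: imult_0 imult_add)

lemma imult_assoc: "nf_ideal_mult (nf_ideal_mult A B) C = nf_ideal_mult A (nf_ideal_mult B C)"
proof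
  show "nf_ideal_mult (nf_ideal_mult A B) C \<subseteq> nf_ideal_mult A (nf_ideal_mult B C)" by (rule imult_assoc1)
  have "nf_ideal_mult A (nf_ideal_mult B C) = nf_ideal_mult (nf_ideal_mult C B) A"
    by (simp add: imult_comm)
  also have "\<dots> \<subseteq> nf_ideal_mult C (nf_ideal_mult B A)" by (rule imult_assoc1)
  also have "\<dots> = nf_ideal_mult (nf_ideal_mult A B) C" by (simp add: imult_comm)
  finally show "nf_ideal_mult A (nf_ideal_mult B C) \<subseteq> nf_ideal_mult (nf_ideal_mult A B) C" .
qed

definition omod :: "'a::field_char_0 set \<Rightarrow> 'a set \<Rightarrow> bool" where
  "omod Oc A \<longleftrightarrow> 0 \<in> A \<and> (\<forall>x\<in>A. \<forall>y\<in>A. x + y \<in> A) \<and> (\<forall>r\<in>Oc. \<forall>x\<in>A. r * x \<in> A)"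

lemma frac_omod: "nf_fractional_ideal Oc A \<Longrightarrow> omod Oc A"
  unfolding nf_fractional_ideal_def omod_def by blast
lemma integral_omod: "nf_integral_ideal Oc A \<Longrightarrow> omod Oc A"
  unfolding nf_integral_ideal_def omod_def by blast
lemma integral_frac: "nf_integral_ideal Oc A \<Longrightarrow> nf_fractional_ideal Oc A"
  unfolding nf_integral_ideal_def nf_fractional_ideal_def
  by (auto intro!: exI[of _ 1])

lemma omod_0: "omod Oc A \<Longrightarrow> 0 \<in> A" by (simp add: omod_def)
lemma omod_add: "omod Oc A \<Longrightarrow> x \<in> A \<Longrightarrow> y \<in> A \<Longrightarrow> x + y \<in> A" by (simp add: omod_def)
lemma omod_mult: "omod Oc A \<Longrightarrow> r \<in> Oc \<Longrightarrow> x \<in> A \<Longrightarrow> r * x \<in> A" by (simp add: omod_def)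

lemma imult_omod: "omod Oc B \<Longrightarrow> omod Oc (nf_ideal_mult A B)"
  unfolding omod_def[of Oc "nf_ideal_mult A B"]
proof (intro conjI ballI)
  assume B: "omod Oc B"
  fix r x assume r: "r \<in> Oc" and x: "x \<in> nf_ideal_mult A B"
  show "r * x \<in> nf_ideal_mult A B"
    using x by (rule imult_induct)
      (auto intro: imult_0 imult_add simp: distrib_left mult.left_commute[of r] imult_prod omod_mult[OF B r])
qed (auto intro: imult_0 imult_add)

lemma imult_one:
  assumes R: "subr Oc" and A: "omod Oc A"
  shows "nf_ideal_mult Oc A = A"
proof
  show "nf_ideal_mult Oc A \<subseteq> A" by (rule imult_min) (auto intro: omod_0[OF A] omod_add[OF A] omod_mult[OF A])
  show "A \<subseteq> nf_ideal_mult Oc A" using imult_prod[OF subr_1[OF R]] by fastforce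
qed

lemma imult_frac:
  assumes R: "subr Oc" and A: "nf_fractional_ideal Oc A" and B: "nf_fractional_ideal Oc B"
  shows "nf_fractional_ideal Oc (nf_ideal_mult A B)"
proof -
  obtain la where la: "la \<noteq> 0" "(\<lambda>x. la * x) ` A \<subseteq> Oc" using A unfolding nf_fractional_ideal_def by blast
  obtain lb where lb: "lb \<noteq> 0" "(\<lambda>x. lb * x) ` B \<subseteq> Oc" using B unfolding nf_fractional_ideal_def by blast
  have "la * lb * z \<in> Oc" if "z \<in> nf_ideal_mult A B" for z
    using that
  proof (rule imult_induct)
    show "la * lb * 0 \<in> Oc" using subr_0[OF R] by simp
    fix a b assume "a \<in> A" "b \<in> B"
    hence "la * a \<in> Oc" "lb * b \<in> Oc" using la lb by auto
    thus "la * lb * (a * b) \<in> Oc" using subr_mult[OF R] by (metis mult.assoc mult.left_commute)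
  next
    fix u v assume "la * lb * u \<in> Oc" "la * lb * v \<in> Oc"
    thus "la * lb * (u + v) \<in> Oc" using subr_add[OF R] by (simp add: distrib_left)
  qed
  moreover have "omod Oc (nf_ideal_mult A B)" using imult_omod frac_omod[OF B] .
  ultimately show ?thesis unfolding nf_fractional_ideal_def omod_def using la(1) lb(1)
    by (intro conjI exI[of _ "la * lb"]) auto
qed

lemma colon_eq_inverse:
  assumes R: "subr Oc" and A: "nf_fractional_ideal Oc A" and B: "nf_fractional_ideal Oc B"
    and AB: "nf_ideal_mult A B = Oc"
  shows "B = nf_colon Oc A"
proof
  show "B \<subseteq> nf_colon Oc A" unfolding nf_colon_def
  proof (intro subsetI CollectI ballI)
    fix x a assume "x \<in> B" "a \<in> A"
    hence "a * x \<in> Oc" using imult_prod[of a A x B] AB by simp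
    thus "x * a \<in> Oc" by (simp add: mult.commute)
  qed
  show "nf_colon Oc A \<subseteq> B"
  proof
    fix x assume x: "x \<in> nf_colon Oc A"
    have "1 \<in> nf_ideal_mult A B" using AB subr_1[OF R] by simp
    hence "x * 1 \<in> B"
    proof (rule imult_induct)
      show "x * 0 \<in> B" using omod_0[OF frac_omod[OF B]] by simp
      fix a b assume "a \<in> A" "b \<in> B"
      hence "x * a \<in> Oc" using x unfolding nf_colon_def by blast
      hence "(x * a) * b \<in> B" using omod_mult[OF frac_omod[OF B] _ \<open>b \<in> B\<close>] by blast
      thus "x * (a * b) \<in> B" by (simp add: mult.assoc)
    next
      fix u v assume "x * u \<in> B" "x * v \<in> B"
      thus "x * (u + v) \<in> B" using omod_add[OF frac_omod[OF B]] by (simp add: distrib_left)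
    qed
    thus "x \<in> B" by simp
  qed
qed

definition iinv :: "'a::field_char_0 set \<Rightarrow> 'a set \<Rightarrow> 'a set" where
  "iinv Oc A = nf_colon Oc A"

lemma invertible_iinv:
  assumes R: "subr Oc" and A: "nf_invertible Oc A"
  shows "nf_fractional_ideal Oc (iinv Oc A)" "nf_ideal_mult A (iinv Oc A) = Oc"
    "nf_ideal_mult (iinv Oc A) A = Oc"
proof -
  obtain B where B: "nf_fractional_ideal Oc B" "nf_ideal_mult A B = Oc" and Af: "nf_fractional_ideal Oc A"
    using A unfolding nf_invertible_def by blast
  have "B = iinv Oc A" unfolding iinv_def by (rule colon_eq_inverse[OF R Af B])
  thus "nf_fractional_ideal Oc (iinv Oc A)" "nf_ideal_mult A (iinv Oc A) = Oc"
    "nf_ideal_mult (iinv Oc A) A = Oc" using B by (auto simp: imult_comm)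
qed

lemma invertibleI:
  "nf_fractional_ideal Oc A \<Longrightarrow> nf_fractional_ideal Oc B \<Longrightarrow> nf_ideal_mult A B = Oc \<Longrightarrow> nf_invertible Oc A"
  unfolding nf_invertible_def by blast

lemma iinv_unique:
  assumes R: "subr Oc" and "nf_fractional_ideal Oc A" "nf_fractional_ideal Oc B" "nf_ideal_mult A B = Oc"
  shows "iinv Oc A = B"
  using colon_eq_inverse[OF assms] unfolding iinv_def by simp

lemma colon_as_mult:
  assumes R: "subr Oc" and A1: "omod Oc A1" and B1: "nf_invertible Oc B1"
  shows "nf_colon A1 B1 = nf_ideal_mult A1 (iinv Oc B1)"
proof
  note BB = invertible_iinv[OF R B1]
  show "nf_colon A1 B1 \<subseteq> nf_ideal_mult A1 (iinv Oc B1)"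
  proof
    fix x assume x: "x \<in> nf_colon A1 B1"
    have "1 \<in> nf_ideal_mult B1 (iinv Oc B1)" using BB(2) subr_1[OF R] by simp
    hence "x * 1 \<in> nf_ideal_mult A1 (iinv Oc B1)"
    proof (rule imult_induct)
      fix a b assume "a \<in> B1" "b \<in> iinv Oc B1"
      hence "x * a \<in> A1" using x unfolding nf_colon_def by blast
      hence "(x * a) * b \<in> nf_ideal_mult A1 (iinv Oc B1)"
        using imult_prod[OF _ \<open>b \<in> iinv Oc B1\<close>] by blast
      thus "x * (a * b) \<in> nf_ideal_mult A1 (iinv Oc B1)" by (simp add: mult.assoc)
    qed (auto intro: imult_0 imult_add simp: distrib_left)
    thus "x \<in> nf_ideal_mult A1 (iinv Oc B1)" by simp
  qed
  show "nf_ideal_mult A1 (iinv Oc B1) \<subseteq> nf_colon A1 B1"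
  proof
    fix z assume z: "z \<in> nf_ideal_mult A1 (iinv Oc B1)"
    show "z \<in> nf_colon A1 B1" unfolding nf_colon_def
    proof (rule CollectI, rule ballI)
      fix b assume b: "b \<in> B1"
      show "z * b \<in> A1" using z
      proof (rule imult_induct)
        show "0 * b \<in> A1" using omod_0[OF A1] by simp
        fix a c assume a: "a \<in> A1" and c: "c \<in> iinv Oc B1"
        hence "c * b \<in> Oc" using b unfolding iinv_def nf_colon_def by blast
        hence "(c * b) * a \<in> A1" using omod_mult[OF A1 _ a] by blast
        thus "a * c * b \<in> A1" by (simp add: algebra_simps)
      next
        fix u v assume "u * b \<in> A1" "v * b \<in> A1"
        thus "(u + v) * b \<in> A1" using omod_add[OF A1] by (simp add: distrib_right)
      qed
    qed
  qed
qed



lemma imult_lcomm: "nf_ideal_mult A (nf_ideal_mult B C) = nf_ideal_mult B (nf_ideal_mult A C)"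
  by (metis imult_assoc imult_comm)

lemmas imult_ac = imult_assoc imult_comm imult_lcomm

lemma subr_omod: "subr Oc \<Longrightarrow> omod Oc Oc"
  unfolding omod_def by (auto intro: subr_0 subr_add subr_mult)

lemma subr_integral: "subr Oc \<Longrightarrow> nf_integral_ideal Oc Oc"
  unfolding nf_integral_ideal_def by (auto intro: subr_0 subr_add subr_mult)

lemma OO: "subr Oc \<Longrightarrow> nf_ideal_mult Oc Oc = Oc"
  using imult_one subr_omod by blast

lemma imult_integral:
  assumes R: "subr Oc" and A: "nf_integral_ideal Oc A" and B: "nf_integral_ideal Oc B"
  shows "nf_integral_ideal Oc (nf_ideal_mult A B)"
proof -
  have "nf_ideal_mult A B \<subseteq> Oc"
    by (rule imult_min) (auto intro: subr_0[OF R] subr_add[OF R] subr_mult[OF R] ideal_sub[OF A] ideal_sub[OF B])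
  thus ?thesis using imult_omod[OF integral_omod[OF B], of A] unfolding nf_integral_ideal_def omod_def by blast
qed

lemma isum_Oc:
  assumes R: "subr Oc" and A: "nf_integral_ideal Oc A" and C: "nf_integral_ideal Oc C"
  shows "nf_ideal_sum A C = Oc \<longleftrightarrow> 1 \<in> nf_ideal_sum A C"
proof
  assume "1 \<in> nf_ideal_sum A C"
  then obtain a c where ac: "a \<in> A" "c \<in> C" "1 = a + c" unfolding nf_ideal_sum_def by blast
  show "nf_ideal_sum A C = Oc"
  proof
    show "nf_ideal_sum A C \<subseteq> Oc" unfolding nf_ideal_sum_def
      using ideal_sub[OF A] ideal_sub[OF C] subr_add[OF R] by blast
    show "Oc \<subseteq> nf_ideal_sum A C"
    proof
      fix x assume x: "x \<in> Oc"
      have "x = x * a + x * c" using ac(3) by (metis distrib_left mult.right_neutral)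
      moreover have "x * a \<in> A" "x * c \<in> C" using ideal_lmult[OF A x ac(1)] ideal_lmult[OF C x ac(2)] .
      ultimately show "x \<in> nf_ideal_sum A C" unfolding nf_ideal_sum_def by blast
    qed
  qed
qed (use subr_1[OF R] in simp)

lemma coprime_mult:
  assumes R: "subr Oc" and A1: "nf_integral_ideal Oc A1" and A2: "nf_integral_ideal Oc A2"
    and C: "nf_integral_ideal Oc C"
    and c1: "nf_ideal_sum A1 C = Oc" and c2: "nf_ideal_sum A2 C = Oc"
  shows "nf_ideal_sum (nf_ideal_mult A1 A2) C = Oc"
proof -
  obtain a1 d1 where 1: "a1 \<in> A1" "d1 \<in> C" "1 = a1 + d1"
    using c1 subr_1[OF R] unfolding nf_ideal_sum_def by blast
  obtain a2 d2 where 2: "a2 \<in> A2" "d2 \<in> C" "1 = a2 + d2"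
    using c2 subr_1[OF R] unfolding nf_ideal_sum_def by blast
  have "1 = a1 * a2 + (a1 * d2 + d1 * a2 + d1 * d2)"
    by (metis "1"(3) "2"(3) add.assoc distrib_left distrib_right mult.right_neutral)
  moreover have "a1 * a2 \<in> nf_ideal_mult A1 A2" using imult_prod 1 2 by blast
  moreover have "a1 * d2 + d1 * a2 + d1 * d2 \<in> C"
    using 1 2 ideal_sub[OF A1] ideal_sub[OF A2] ideal_sub[OF C]
    by (intro ideal_add[OF C] ideal_lmult[OF C] ideal_rmult[OF C]) auto
  ultimately have "1 \<in> nf_ideal_sum (nf_ideal_mult A1 A2) C" unfolding nf_ideal_sum_def by blast
  thus ?thesis using isum_Oc[OF R imult_integral[OF R A1 A2] C] by blast
qed

lemma coprime_mono:
  assumes R: "subr Oc" and A: "nf_integral_ideal Oc A" and M: "nf_integral_ideal Oc M"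
    and DM: "D \<subseteq> M" and c: "nf_ideal_sum A D = Oc"
  shows "nf_ideal_sum A M = Oc"
proof -
  have "1 \<in> nf_ideal_sum A D" using c subr_1[OF R] by simp
  hence "1 \<in> nf_ideal_sum A M" using DM unfolding nf_ideal_sum_def by blast
  thus ?thesis using isum_Oc[OF R A M] by blast
qed

lemma J_char:
  assumes R: "subr Oc" and C: "nf_integral_ideal Oc C"
  shows "A \<in> nf_Jstar Oc C \<longleftrightarrow> (\<exists>A1 B1. nf_integral_ideal Oc A1 \<and> nf_integral_ideal Oc B1 \<and>
     nf_invertible Oc A1 \<and> nf_invertible Oc B1 \<and> nf_ideal_sum A1 C = Oc \<and> nf_ideal_sum B1 C = Oc \<and>
     A = nf_ideal_mult A1 (iinv Oc B1))"
proof
  assume "A \<in> nf_Jstar Oc C"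
  then obtain A1 B1 where Ai: "nf_invertible Oc A" and A: "A = nf_colon A1 B1" and A1: "nf_integral_ideal Oc A1"
    and B1: "nf_integral_ideal Oc B1" "nf_invertible Oc B1" and cp: "nf_ideal_sum A1 C = Oc" "nf_ideal_sum B1 C = Oc"
    unfolding nf_Jstar_def nf_frac_coprime_def by blast
  have A': "A = nf_ideal_mult A1 (iinv Oc B1)" using A colon_as_mult[OF R integral_omod[OF A1] B1(2)] by simp
  note IA = invertible_iinv[OF R Ai] and IB = invertible_iinv[OF R B1(2)]
  have "nf_ideal_mult A B1 = nf_ideal_mult A1 (nf_ideal_mult (iinv Oc B1) B1)"
    unfolding A' by (simp add: imult_assoc)
  also have "\<dots> = A1" using IB(3) imult_one[OF R integral_omod[OF A1]] by (simp add: imult_comm)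
  finally have A1eq: "A1 = nf_ideal_mult A B1" by simp
  have "nf_ideal_mult A1 (nf_ideal_mult (iinv Oc A) (iinv Oc B1)) =
     nf_ideal_mult (nf_ideal_mult A (iinv Oc A)) (nf_ideal_mult B1 (iinv Oc B1))"
    unfolding A1eq by (simp only: imult_ac)
  also have "\<dots> = Oc" using IA IB OO[OF R] by simp
  finally have "nf_invertible Oc A1"
    using invertibleI[OF integral_frac[OF A1] imult_frac[OF R IA(1) IB(1)]] by blast
  thus "\<exists>A1 B1. nf_integral_ideal Oc A1 \<and> nf_integral_ideal Oc B1 \<and>
     nf_invertible Oc A1 \<and> nf_invertible Oc B1 \<and> nf_ideal_sum A1 C = Oc \<and> nf_ideal_sum B1 C = Oc \<and>
     A = nf_ideal_mult A1 (iinv Oc B1)" using A1 B1 cp A' by blast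
next
  assume "\<exists>A1 B1. nf_integral_ideal Oc A1 \<and> nf_integral_ideal Oc B1 \<and>
     nf_invertible Oc A1 \<and> nf_invertible Oc B1 \<and> nf_ideal_sum A1 C = Oc \<and> nf_ideal_sum B1 C = Oc \<and>
     A = nf_ideal_mult A1 (iinv Oc B1)"
  then obtain A1 B1 where A1: "nf_integral_ideal Oc A1" "nf_invertible Oc A1" and
    B1: "nf_integral_ideal Oc B1" "nf_invertible Oc B1" and cp: "nf_ideal_sum A1 C = Oc" "nf_ideal_sum B1 C = Oc"
    and A: "A = nf_ideal_mult A1 (iinv Oc B1)" by blast
  note IA = invertible_iinv[OF R A1(2)] and IB = invertible_iinv[OF R B1(2)]
  have Af: "nf_fractional_ideal Oc A" unfolding A using imult_frac[OF R integral_frac[OF A1(1)] IB(1)] .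
  have "nf_ideal_mult A (nf_ideal_mult B1 (iinv Oc A1)) =
     nf_ideal_mult (nf_ideal_mult A1 (iinv Oc A1)) (nf_ideal_mult B1 (iinv Oc B1))"
    unfolding A by (simp only: imult_ac)
  also have "\<dots> = Oc" using IA IB OO[OF R] by simp
  finally have "nf_invertible Oc A"
    using invertibleI[OF Af imult_frac[OF R integral_frac[OF B1(1)] IA(1)]] by blast
  moreover have "A = nf_colon A1 B1" using A colon_as_mult[OF R integral_omod[OF A1(1)] B1(2)] by simp
  ultimately show "A \<in> nf_Jstar Oc C" unfolding nf_Jstar_def nf_frac_coprime_def
    using A1 B1 cp by blast
qed

lemma J_frac: "A \<in> nf_Jstar Oc C \<Longrightarrow> nf_fractional_ideal Oc A"
  unfolding nf_Jstar_def nf_invertible_def by blast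

lemma J_invertible: "A \<in> nf_Jstar Oc C \<Longrightarrow> nf_invertible Oc A"
  unfolding nf_Jstar_def by blast

lemma J_mult:
  assumes R: "subr Oc" and C: "nf_integral_ideal Oc C"
    and A: "A \<in> nf_Jstar Oc C" and A': "A' \<in> nf_Jstar Oc C"
  shows "nf_ideal_mult A A' \<in> nf_Jstar Oc C"
proof -
  obtain A1 B1 where A1: "nf_integral_ideal Oc A1" "nf_invertible Oc A1" and
    B1: "nf_integral_ideal Oc B1" "nf_invertible Oc B1" and cp: "nf_ideal_sum A1 C = Oc" "nf_ideal_sum B1 C = Oc"
    and Aeq: "A = nf_ideal_mult A1 (iinv Oc B1)" using A J_char[OF R C] by blast
  obtain A1' B1' where A1': "nf_integral_ideal Oc A1'" "nf_invertible Oc A1'" and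
    B1': "nf_integral_ideal Oc B1'" "nf_invertible Oc B1'" and cp': "nf_ideal_sum A1' C = Oc" "nf_ideal_sum B1' C = Oc"
    and Aeq': "A' = nf_ideal_mult A1' (iinv Oc B1')" using A' J_char[OF R C] by blast
  note IA = invertible_iinv[OF R A1(2)] and IB = invertible_iinv[OF R B1(2)]
  note IA' = invertible_iinv[OF R A1'(2)] and IB' = invertible_iinv[OF R B1'(2)]
  have inv2: "nf_invertible Oc (nf_ideal_mult X Y) \<and> iinv Oc (nf_ideal_mult X Y) = nf_ideal_mult (iinv Oc X) (iinv Oc Y)"
    if X: "nf_integral_ideal Oc X" "nf_invertible Oc X" and Y: "nf_integral_ideal Oc Y" "nf_invertible Oc Y" for X Y
  proof -
    note IX = invertible_iinv[OF R X(2)] and IY = invertible_iinv[OF R Y(2)]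
    have "nf_ideal_mult (nf_ideal_mult X Y) (nf_ideal_mult (iinv Oc X) (iinv Oc Y)) =
       nf_ideal_mult (nf_ideal_mult X (iinv Oc X)) (nf_ideal_mult Y (iinv Oc Y))" by (simp only: imult_ac)
    also have "\<dots> = Oc" using IX IY OO[OF R] by simp
    finally have e: "nf_ideal_mult (nf_ideal_mult X Y) (nf_ideal_mult (iinv Oc X) (iinv Oc Y)) = Oc" .
    have f1: "nf_fractional_ideal Oc (nf_ideal_mult X Y)" using imult_frac[OF R integral_frac[OF X(1)] integral_frac[OF Y(1)]] .
    have f2: "nf_fractional_ideal Oc (nf_ideal_mult (iinv Oc X) (iinv Oc Y))" using imult_frac[OF R IX(1) IY(1)] .
    show ?thesis using invertibleI[OF f1 f2 e] iinv_unique[OF R f1 f2 e] by blast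
  qed
  have "nf_ideal_mult A A' = nf_ideal_mult (nf_ideal_mult A1 A1') (nf_ideal_mult (iinv Oc B1) (iinv Oc B1'))"
    unfolding Aeq Aeq' by (simp only: imult_ac)
  also have "\<dots> = nf_ideal_mult (nf_ideal_mult A1 A1') (iinv Oc (nf_ideal_mult B1 B1'))"
    using inv2[OF B1 B1'] by simp
  finally have eq: "nf_ideal_mult A A' = nf_ideal_mult (nf_ideal_mult A1 A1') (iinv Oc (nf_ideal_mult B1 B1'))" .
  show ?thesis unfolding J_char[OF R C] eq
    using imult_integral[OF R A1(1) A1'(1)] imult_integral[OF R B1(1) B1'(1)]
      inv2[OF A1 A1'] inv2[OF B1 B1'] coprime_mult[OF R A1(1) A1'(1) C cp(1) cp'(1)]
      coprime_mult[OF R B1(1) B1'(1) C cp(2) cp'(2)] by blast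
qed

lemma J_inv:
  assumes R: "subr Oc" and C: "nf_integral_ideal Oc C" and A: "A \<in> nf_Jstar Oc C"
  shows "iinv Oc A \<in> nf_Jstar Oc C" "nf_ideal_mult (iinv Oc A) A = Oc"
proof -
  obtain A1 B1 where A1: "nf_integral_ideal Oc A1" "nf_invertible Oc A1" and
    B1: "nf_integral_ideal Oc B1" "nf_invertible Oc B1" and cp: "nf_ideal_sum A1 C = Oc" "nf_ideal_sum B1 C = Oc"
    and Aeq: "A = nf_ideal_mult A1 (iinv Oc B1)" using A J_char[OF R C] by blast
  note IA = invertible_iinv[OF R A1(2)] and IB = invertible_iinv[OF R B1(2)]
  have "nf_ideal_mult A (nf_ideal_mult B1 (iinv Oc A1)) =
     nf_ideal_mult (nf_ideal_mult A1 (iinv Oc A1)) (nf_ideal_mult B1 (iinv Oc B1))"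
    unfolding Aeq by (simp only: imult_ac)
  also have "\<dots> = Oc" using IA IB OO[OF R] by simp
  finally have e: "nf_ideal_mult A (nf_ideal_mult B1 (iinv Oc A1)) = Oc" .
  have "iinv Oc A = nf_ideal_mult B1 (iinv Oc A1)"
    using iinv_unique[OF R J_frac[OF A] imult_frac[OF R integral_frac[OF B1(1)] IA(1)] e] .
  thus "iinv Oc A \<in> nf_Jstar Oc C" unfolding J_char[OF R C] using A1 B1 cp by blast
  show "nf_ideal_mult (iinv Oc A) A = Oc" using invertible_iinv[OF R J_invertible[OF A]] by blast
qed

lemma iinv_Oc: "subr Oc \<Longrightarrow> iinv Oc Oc = Oc"
  using iinv_unique[OF _ integral_frac[OF subr_integral] integral_frac[OF subr_integral] OO] by blast

lemma J_one:
  assumes R: "subr Oc" and C: "nf_integral_ideal Oc C"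
  shows "Oc \<in> nf_Jstar Oc C"
proof -
  have inv: "nf_invertible Oc Oc" using invertibleI[OF integral_frac[OF subr_integral[OF R]] integral_frac[OF subr_integral[OF R]] OO[OF R]] .
  have cp: "nf_ideal_sum Oc C = Oc" using isum_Oc[OF R subr_integral[OF R] C] subr_1[OF R] ideal_0[OF C]
    unfolding nf_ideal_sum_def by force
  show ?thesis unfolding J_char[OF R C] using subr_integral[OF R] inv cp OO[OF R] iinv_Oc[OF R]
    by (intro exI[of _ Oc]) simp
qed

lemma J_group:
  assumes R: "subr Oc" and C: "nf_integral_ideal Oc C"
  shows "comm_group (nf_Jgroup Oc C)"
proof (rule comm_groupI)
  fix x y assume "x \<in> carrier (nf_Jgroup Oc C)" "y \<in> carrier (nf_Jgroup Oc C)"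
  thus "x \<otimes>\<^bsub>nf_Jgroup Oc C\<^esub> y \<in> carrier (nf_Jgroup Oc C)"
    using J_mult[OF R C] by (simp add: nf_Jgroup_def)
next
  show "\<one>\<^bsub>nf_Jgroup Oc C\<^esub> \<in> carrier (nf_Jgroup Oc C)" using J_one[OF R C] by (simp add: nf_Jgroup_def)
next
  fix x y z show "x \<otimes>\<^bsub>nf_Jgroup Oc C\<^esub> y \<otimes>\<^bsub>nf_Jgroup Oc C\<^esub> z = x \<otimes>\<^bsub>nf_Jgroup Oc C\<^esub> (y \<otimes>\<^bsub>nf_Jgroup Oc C\<^esub> z)"
    by (simp add: nf_Jgroup_def imult_assoc)
next
  fix x y show "x \<otimes>\<^bsub>nf_Jgroup Oc C\<^esub> y = y \<otimes>\<^bsub>nf_Jgroup Oc C\<^esub> x"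
    by (simp add: nf_Jgroup_def imult_comm)
next
  fix x assume "x \<in> carrier (nf_Jgroup Oc C)"
  thus "\<one>\<^bsub>nf_Jgroup Oc C\<^esub> \<otimes>\<^bsub>nf_Jgroup Oc C\<^esub> x = x"
    using imult_one[OF R frac_omod[OF J_frac]] by (simp add: nf_Jgroup_def)
next
  fix x assume x: "x \<in> carrier (nf_Jgroup Oc C)"
  thus "\<exists>y\<in>carrier (nf_Jgroup Oc C). y \<otimes>\<^bsub>nf_Jgroup Oc C\<^esub> x = \<one>\<^bsub>nf_Jgroup Oc C\<^esub>"
    using J_inv[OF R C] by (simp add: nf_Jgroup_def) blast
qed



lemma principal_omod: "subr Oc \<Longrightarrow> omod Oc (nf_principal Oc a)"
  unfolding omod_def nf_principal_def
proof (intro conjI ballI)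
  assume R: "subr Oc"
  show "0 \<in> (*) a ` Oc" using subr_0[OF R] by (metis image_eqI mult_zero_right)
  fix x y assume "x \<in> (*) a ` Oc" "y \<in> (*) a ` Oc"
  then obtain u v where "u \<in> Oc" "v \<in> Oc" "x = a * u" "y = a * v" by blast
  thus "x + y \<in> (*) a ` Oc" using subr_add[OF R] by (metis distrib_left image_eqI)
next
  assume R: "subr Oc"
  fix r x assume "r \<in> Oc" "x \<in> (*) a ` Oc"
  then obtain u where "u \<in> Oc" "x = a * u" by blast
  moreover have "r * (a * u) = a * (r * u)" by (simp add: algebra_simps)
  ultimately show "r * x \<in> (*) a ` Oc" using subr_mult[OF R \<open>r \<in> Oc\<close> \<open>u \<in> Oc\<close>] by blast
qed

lemma principal_integral: "subr Oc \<Longrightarrow> a \<in> Oc \<Longrightarrow> nf_integral_ideal Oc (nf_principal Oc a)"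
  using principal_omod[of Oc a] unfolding nf_integral_ideal_def omod_def nf_principal_def
  by (auto intro: subr_mult)

lemma principal_frac:
  assumes R: "subr Oc" and a: "a \<noteq> 0"
  shows "nf_fractional_ideal Oc (nf_principal Oc a)"
proof -
  have "(\<lambda>x. inverse a * x) ` nf_principal Oc a \<subseteq> Oc" using a unfolding nf_principal_def
    by (auto simp: mult.assoc[symmetric])
  thus ?thesis using principal_omod[OF R, of a] a unfolding nf_fractional_ideal_def omod_def
    by (intro conjI exI[of _ "inverse a"]) auto
qed

lemma principal_mem: "subr Oc \<Longrightarrow> a \<in> nf_principal Oc a"
  unfolding nf_principal_def using subr_1 by (metis image_eqI mult_1_right)

lemma principal_mult:
  assumes R: "subr Oc"
  shows "nf_ideal_mult (nf_principal Oc a) (nf_principal Oc b) = nf_principal Oc (a * b)"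
proof
  show "nf_ideal_mult (nf_principal Oc a) (nf_principal Oc b) \<subseteq> nf_principal Oc (a * b)"
  proof (rule imult_min)
    show "0 \<in> nf_principal Oc (a * b)" using omod_0[OF principal_omod[OF R]] .
    show "u + v \<in> nf_principal Oc (a * b)" if "u \<in> nf_principal Oc (a * b)" "v \<in> nf_principal Oc (a * b)" for u v
      using omod_add[OF principal_omod[OF R]] that .
    fix x y assume "x \<in> nf_principal Oc a" "y \<in> nf_principal Oc b"
    then obtain u v where uv: "u \<in> Oc" "v \<in> Oc" "x = a * u" "y = b * v" unfolding nf_principal_def by blast
    have "x * y = (a * b) * (u * v)" using uv by (simp add: algebra_simps)
    thus "x * y \<in> nf_principal Oc (a * b)" unfolding nf_principal_def using subr_mult[OF R uv(1,2)] by blast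
  qed
  show "nf_principal Oc (a * b) \<subseteq> nf_ideal_mult (nf_principal Oc a) (nf_principal Oc b)"
  proof
    fix z assume "z \<in> nf_principal Oc (a * b)"
    then obtain u where u: "u \<in> Oc" "z = a * b * u" unfolding nf_principal_def by blast
    have "a \<in> nf_principal Oc a" by (rule principal_mem[OF R])
    moreover have "b * u \<in> nf_principal Oc b" unfolding nf_principal_def using u(1) by blast
    ultimately have "a * (b * u) \<in> nf_ideal_mult (nf_principal Oc a) (nf_principal Oc b)" by (rule imult_prod)
    thus "z \<in> nf_ideal_mult (nf_principal Oc a) (nf_principal Oc b)" using u(2) by (simp add: mult.assoc)
  qed
qed

lemma principal_1: "nf_principal Oc 1 = Oc"
  unfolding nf_principal_def by simp

lemma principal_inv:
  assumes R: "subr Oc" and a: "a \<noteq> 0"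
  shows "nf_invertible Oc (nf_principal Oc a)" "iinv Oc (nf_principal Oc a) = nf_principal Oc (inverse a)"
    "nf_ideal_mult (nf_principal Oc a) (nf_principal Oc (inverse a)) = Oc"
proof -
  show e: "nf_ideal_mult (nf_principal Oc a) (nf_principal Oc (inverse a)) = Oc"
    using principal_mult[OF R] principal_1 a by simp
  have f: "nf_fractional_ideal Oc (nf_principal Oc (inverse a))" using principal_frac[OF R] a by simp
  show "nf_invertible Oc (nf_principal Oc a)" using invertibleI[OF principal_frac[OF R a] f e] .
  show "iinv Oc (nf_principal Oc a) = nf_principal Oc (inverse a)" using iinv_unique[OF R principal_frac[OF R a] f e] .
qed

section \<open>The multiplicative set S and congruence mod M\<close>

lemma S_char:
  assumes R: "subr Oc" and M: "nf_integral_ideal Oc M"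
  shows "s \<in> nf_S Oc M \<longleftrightarrow> s \<in> Oc \<and> (\<exists>r\<in>Oc. \<exists>m\<in>M. s * r + m = 1)"
proof
  assume s: "s \<in> nf_S Oc M"
  hence sO: "s \<in> Oc" and "nf_ideal_sum (nf_principal Oc s) M = Oc" unfolding nf_S_def by auto
  hence "1 \<in> nf_ideal_sum (nf_principal Oc s) M" using subr_1[OF R] by simp
  then obtain r m where "r \<in> Oc" "m \<in> M" "s * r + m = 1" unfolding nf_ideal_sum_def nf_principal_def by auto
  thus "s \<in> Oc \<and> (\<exists>r\<in>Oc. \<exists>m\<in>M. s * r + m = 1)" using sO by blast
next
  assume "s \<in> Oc \<and> (\<exists>r\<in>Oc. \<exists>m\<in>M. s * r + m = 1)"
  then obtain r m where sO: "s \<in> Oc" and rm: "r \<in> Oc" "m \<in> M" "s * r + m = 1" by blast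
  have "1 \<in> nf_ideal_sum (nf_principal Oc s) M" unfolding nf_ideal_sum_def nf_principal_def
    using rm by (intro CollectI exI[of _ "s * r"] exI[of _ m]) auto
  thus "s \<in> nf_S Oc M" unfolding nf_S_def using sO isum_Oc[OF R principal_integral[OF R sO] M] by blast
qed

lemma S_mult:
  assumes R: "subr Oc" and M: "nf_integral_ideal Oc M" and s: "s \<in> nf_S Oc M" and t: "t \<in> nf_S Oc M"
  shows "s * t \<in> nf_S Oc M"
proof -
  obtain r m where sO: "s \<in> Oc" and rm: "r \<in> Oc" "m \<in> M" "s * r + m = 1" using s S_char[OF R M] by blast
  obtain r' m' where tO: "t \<in> Oc" and rm': "r' \<in> Oc" "m' \<in> M" "t * r' + m' = 1" using t S_char[OF R M] by blast
  have "(s * t) * (r * r') + (m * (t * r') + (s * r) * m' + m * m') = (s * r + m) * (t * r' + m')"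
    by (simp add: algebra_simps)
  also have "\<dots> = 1" using rm(3) rm'(3) by simp
  finally have "(s * t) * (r * r') + (m * (t * r') + (s * r) * m' + m * m') = 1" .
  moreover have "m * (t * r') + (s * r) * m' + m * m' \<in> M"
  proof -
    have "m * (t * r') \<in> M" using ideal_rmult[OF M subr_mult[OF R tO rm'(1)] rm(2)] .
    moreover have "(s * r) * m' \<in> M" using ideal_lmult[OF M subr_mult[OF R sO rm(1)] rm'(2)] .
    moreover have "m * m' \<in> M" using ideal_rmult[OF M ideal_sub[OF M rm'(2)] rm(2)] .
    ultimately show ?thesis using ideal_add[OF M] by blast
  qed
  ultimately show ?thesis using S_char[OF R M] subr_mult[OF R sO tO] subr_mult[OF R rm(1) rm'(1)] by blast
qed

lemma S_add:
  assumes R: "subr Oc" and M: "nf_integral_ideal Oc M" and s: "s \<in> nf_S Oc M" and x: "x \<in> M"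
  shows "s + x \<in> nf_S Oc M"
proof -
  obtain r m where sO: "s \<in> Oc" and rm: "r \<in> Oc" "m \<in> M" "s * r + m = 1" using s S_char[OF R M] by blast
  have "(s + x) * r + (m - x * r) = 1" using rm(3) by (simp add: algebra_simps)
  moreover have "m - x * r \<in> M" using rm x by (intro ideal_diff[OF R M] ideal_rmult[OF M]) auto
  moreover have "s + x \<in> Oc" using subr_add[OF R sO ideal_sub[OF M x]] .
  ultimately show ?thesis using S_char[OF R M] rm(1) by blast
qed

lemma S_1: "subr Oc \<Longrightarrow> nf_integral_ideal Oc M \<Longrightarrow> 1 \<in> nf_S Oc M"
proof -
  assume R: "subr Oc" and M: "nf_integral_ideal Oc M"
  have "(1::'a) * 1 + 0 = 1" by simp
  thus ?thesis using S_char[OF R M, of 1] subr_1[OF R] ideal_0[OF M] by blast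
qed

lemma cong1_char:
  assumes R: "subr Oc" and M: "nf_integral_ideal Oc M"
  shows "nf_cong1 Oc M \<alpha> \<longleftrightarrow> (\<exists>x\<in>M. \<exists>s\<in>nf_S Oc M. s \<noteq> 0 \<and> \<alpha> - 1 = x / s)"
proof
  assume "nf_cong1 Oc M \<alpha>"
  hence "\<alpha> - 1 \<in> nf_ideal_mult M (nf_localize Oc (nf_S Oc M))" unfolding nf_cong1_def .
  thus "\<exists>x\<in>M. \<exists>s\<in>nf_S Oc M. s \<noteq> 0 \<and> \<alpha> - 1 = x / s"
  proof (rule imult_induct)
    show "\<exists>x\<in>M. \<exists>s\<in>nf_S Oc M. s \<noteq> 0 \<and> 0 = x / s" using ideal_0[OF M] S_1[OF R M] by force
  next
    fix m l assume m: "m \<in> M" and l: "l \<in> nf_localize Oc (nf_S Oc M)"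
    then obtain y t where yt: "y \<in> Oc" "t \<in> nf_S Oc M" "t \<noteq> 0" "l = y / t" unfolding nf_localize_def by blast
    have "m * y \<in> M" using ideal_rmult[OF M yt(1) m] .
    moreover have "m * l = (m * y) / t" using yt(4) by simp
    ultimately show "\<exists>x\<in>M. \<exists>s\<in>nf_S Oc M. s \<noteq> 0 \<and> m * l = x / s" using yt by blast
  next
    fix u v assume "\<exists>x\<in>M. \<exists>s\<in>nf_S Oc M. s \<noteq> 0 \<and> u = x / s" "\<exists>x\<in>M. \<exists>s\<in>nf_S Oc M. s \<noteq> 0 \<and> v = x / s"
    then obtain x s y t where xs: "x \<in> M" "s \<in> nf_S Oc M" "s \<noteq> 0" "u = x / s"
      and yt: "y \<in> M" "t \<in> nf_S Oc M" "t \<noteq> 0" "v = y / t" by blast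
    have "u + v = (x * t + y * s) / (s * t)" using xs yt by (simp add: field_simps)
    moreover have "x * t + y * s \<in> M" using xs yt S_char[OF R M]
      by (intro ideal_add[OF M] ideal_rmult[OF M]) auto
    moreover have "s * t \<in> nf_S Oc M" "s * t \<noteq> 0" using S_mult[OF R M xs(2) yt(2)] xs yt by auto
    ultimately show "\<exists>x\<in>M. \<exists>s\<in>nf_S Oc M. s \<noteq> 0 \<and> u + v = x / s" by blast
  qed
next
  assume "\<exists>x\<in>M. \<exists>s\<in>nf_S Oc M. s \<noteq> 0 \<and> \<alpha> - 1 = x / s"
  then obtain x s where xs: "x \<in> M" "s \<in> nf_S Oc M" "s \<noteq> 0" "\<alpha> - 1 = x / s" by blast
  have "1 / s \<in> nf_localize Oc (nf_S Oc M)" unfolding nf_localize_def using subr_1[OF R] xs by blast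
  hence "x * (1 / s) \<in> nf_ideal_mult M (nf_localize Oc (nf_S Oc M))" using imult_prod xs(1) by blast
  thus "nf_cong1 Oc M \<alpha>" unfolding nf_cong1_def using xs(4) by simp
qed

lemma cong1_mult:
  assumes R: "subr Oc" and M: "nf_integral_ideal Oc M" and a: "nf_cong1 Oc M \<alpha>" and b: "nf_cong1 Oc M \<beta>"
  shows "nf_cong1 Oc M (\<alpha> * \<beta>)"
proof -
  obtain x s where xs: "x \<in> M" "s \<in> nf_S Oc M" "s \<noteq> 0" "\<alpha> - 1 = x / s" using a cong1_char[OF R M] by blast
  obtain y t where yt: "y \<in> M" "t \<in> nf_S Oc M" "t \<noteq> 0" "\<beta> - 1 = y / t" using b cong1_char[OF R M] by blast
  have a': "\<alpha> = (s + x) / s" "\<beta> = (t + y) / t" using xs yt by (simp_all add: field_simps)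
  have "\<alpha> * \<beta> - 1 = (x * t + y * s + x * y) / (s * t)" unfolding a' using xs yt by (simp add: field_simps)
  moreover have "x * t + y * s + x * y \<in> M" using xs yt S_char[OF R M] ideal_sub[OF M]
    by (intro ideal_add[OF M] ideal_rmult[OF M]) auto
  moreover have "s * t \<in> nf_S Oc M" "s * t \<noteq> 0" using S_mult[OF R M xs(2) yt(2)] xs yt by auto
  ultimately show ?thesis using cong1_char[OF R M] by blast
qed

lemma cong1_inv:
  assumes R: "subr Oc" and M: "nf_integral_ideal Oc M" and a: "nf_cong1 Oc M \<alpha>" and nz: "\<alpha> \<noteq> 0"
  shows "nf_cong1 Oc M (inverse \<alpha>)"
proof -
  obtain x s where xs: "x \<in> M" "s \<in> nf_S Oc M" "s \<noteq> 0" "\<alpha> - 1 = x / s" using a cong1_char[OF R M] by blast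
  have a': "\<alpha> = (s + x) / s" using xs by (simp add: field_simps)
  have sx: "s + x \<noteq> 0" using a' nz by auto
  have "inverse \<alpha> - 1 = (- x) / (s + x)" unfolding a' using xs sx by (simp add: field_simps)
  moreover have "- x \<in> M" using ideal_uminus[OF R M xs(1)] .
  moreover have "s + x \<in> nf_S Oc M" using S_add[OF R M xs(2,1)] .
  ultimately show ?thesis using cong1_char[OF R M] sx by blast
qed

lemma cong1_int:
  assumes R: "subr Oc" and M: "nf_integral_ideal Oc M" and b: "\<beta> - 1 \<in> M"
  shows "nf_cong1 Oc M \<beta>"
  using cong1_char[OF R M] b S_1[OF R M] by fastforce

lemma P_in_J:
  assumes R: "subr Oc" and M: "nf_integral_ideal Oc M" and A: "A \<in> nf_P Oc M Sig"
  shows "A \<in> nf_Jstar Oc M"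
proof -
  obtain \<alpha> where a: "\<alpha> \<noteq> 0" "nf_cong1 Oc M \<alpha>" "A = nf_principal Oc \<alpha>" using A unfolding nf_P_def by blast
  obtain x s where xs: "x \<in> M" "s \<in> nf_S Oc M" "s \<noteq> 0" "\<alpha> - 1 = x / s" using a(2) cong1_char[OF R M] by blast
  have a': "\<alpha> = (s + x) * inverse s" using xs by (simp add: field_simps)
  have sx: "s + x \<noteq> 0" using a' a(1) by auto
  have sxS: "s + x \<in> nf_S Oc M" using S_add[OF R M xs(2,1)] .
  have sO: "s \<in> Oc" "s + x \<in> Oc" using xs(2) sxS unfolding nf_S_def by auto
  have cp: "nf_ideal_sum (nf_principal Oc s) M = Oc" "nf_ideal_sum (nf_principal Oc (s + x)) M = Oc"
    using xs(2) sxS unfolding nf_S_def by auto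
  have "A = nf_ideal_mult (nf_principal Oc (s + x)) (iinv Oc (nf_principal Oc s))"
    unfolding a(3) principal_inv(2)[OF R xs(3)] principal_mult[OF R] a' ..
  thus ?thesis unfolding J_char[OF R M]
    using principal_integral[OF R sO(1)] principal_integral[OF R sO(2)] principal_inv(1)[OF R xs(3)]
      principal_inv(1)[OF R sx] cp by blast
qed

lemma P_mult:
  assumes R: "subr Oc" and M: "nf_integral_ideal Oc M" and Sig: "\<forall>\<rho>\<in>Sig. nf_real_embedding \<rho>"
    and A: "A \<in> nf_P Oc M Sig" and B: "B \<in> nf_P Oc M Sig"
  shows "nf_ideal_mult A B \<in> nf_P Oc M Sig"
proof -
  obtain \<alpha> where a: "\<alpha> \<noteq> 0" "nf_cong1 Oc M \<alpha>" "\<forall>\<rho>\<in>Sig. \<rho> \<alpha> > 0" "A = nf_principal Oc \<alpha>"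
    using A unfolding nf_P_def by blast
  obtain \<beta> where b: "\<beta> \<noteq> 0" "nf_cong1 Oc M \<beta>" "\<forall>\<rho>\<in>Sig. \<rho> \<beta> > 0" "B = nf_principal Oc \<beta>"
    using B unfolding nf_P_def by blast
  have "\<forall>\<rho>\<in>Sig. \<rho> (\<alpha> * \<beta>) > 0" using a(3) b(3) Sig emb_mult by (simp add: emb_mult)
  moreover have "nf_ideal_mult A B = nf_principal Oc (\<alpha> * \<beta>)" using a(4) b(4) principal_mult[OF R] by simp
  ultimately show ?thesis unfolding nf_P_def using a b cong1_mult[OF R M a(2) b(2)] by auto
qed

lemma P_inv:
  assumes R: "subr Oc" and M: "nf_integral_ideal Oc M" and Sig: "\<forall>\<rho>\<in>Sig. nf_real_embedding \<rho>"
    and A: "A \<in> nf_P Oc M Sig"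
  shows "iinv Oc A \<in> nf_P Oc M Sig"
proof -
  obtain \<alpha> where a: "\<alpha> \<noteq> 0" "nf_cong1 Oc M \<alpha>" "\<forall>\<rho>\<in>Sig. \<rho> \<alpha> > 0" "A = nf_principal Oc \<alpha>"
    using A unfolding nf_P_def by blast
  have "\<forall>\<rho>\<in>Sig. \<rho> (inverse \<alpha>) > 0" using a(1,3) Sig emb_inverse by (simp add: emb_inverse)
  moreover have "iinv Oc A = nf_principal Oc (inverse \<alpha>)" using a(4) principal_inv(2)[OF R a(1)] by simp
  ultimately show ?thesis unfolding nf_P_def using a cong1_inv[OF R M a(2) a(1)] by auto
qed

lemma P_one:
  assumes R: "subr Oc" and M: "nf_integral_ideal Oc M" and Sig: "\<forall>\<rho>\<in>Sig. nf_real_embedding \<rho>"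
  shows "Oc \<in> nf_P Oc M Sig"
proof -
  have "nf_cong1 Oc M 1" using cong1_int[OF R M] ideal_0[OF M] by simp
  moreover have "\<forall>\<rho>\<in>Sig. \<rho> 1 > 0"
  proof
    fix \<rho> assume "\<rho> \<in> Sig"
    thus "\<rho> 1 > 0" using Sig emb_basic(2)[of \<rho>] by simp
  qed
  ultimately show ?thesis unfolding nf_P_def using principal_1[of Oc] by force
qed



lemma iinv_omod: "subr Oc \<Longrightarrow> nf_invertible Oc I \<Longrightarrow> omod Oc (iinv Oc I)"
  using invertible_iinv(1) frac_omod by blast

lemma iinv_prod: "x \<in> I \<Longrightarrow> y \<in> iinv Oc I \<Longrightarrow> x * y \<in> Oc"
  unfolding iinv_def nf_colon_def by (auto simp: mult.commute)

lemma invertible_nonzero: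
  assumes R: "subr Oc" and I: "nf_invertible Oc I" and Ii: "nf_integral_ideal Oc I"
  shows "I \<noteq> {0}"
proof
  assume "I = {0}"
  hence "nf_ideal_mult I (iinv Oc I) \<subseteq> {0}" by (intro imult_min) auto
  moreover have "1 \<in> nf_ideal_mult I (iinv Oc I)" using invertible_iinv(2)[OF R I] subr_1[OF R] by simp
  ultimately show False by auto
qed

lemma isum_elim:
  assumes "z \<in> nf_ideal_sum A B"
  obtains a b where "a \<in> A" "b \<in> B" "z = a + b"
  using assms unfolding nf_ideal_sum_def by blast

lemma finite_bound:
  fixes V :: "real set"
  assumes "finite V"
  shows "\<exists>B. \<forall>v\<in>V. \<bar>v\<bar> \<le> B"
  using assms by (intro exI[of _ "\<Sum>v\<in>V. \<bar>v\<bar>"]) (auto intro: member_le_sum)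

lemma key_gen:
  assumes ord: "nf_is_order Oc" and D: "nf_integral_ideal Oc D" and nz: "D \<noteq> {0}"
    and M: "nf_integral_ideal Oc M" and DM: "D \<subseteq> M"
    and I: "nf_integral_ideal Oc I" and Iinv: "nf_invertible Oc I" and IM: "nf_ideal_sum I M = Oc"
    and Sig: "\<forall>\<rho>\<in>Sig. nf_real_embedding \<rho>"
  shows "\<exists>\<beta> y. \<beta> \<in> I \<and> \<beta> \<noteq> 0 \<and> \<beta> - 1 \<in> M \<and> (\<forall>\<rho>\<in>Sig. \<rho> \<beta> > 0) \<and> y \<in> iinv Oc I \<and> \<beta> * y - 1 \<in> D"
proof -
  have R: "subr Oc" using ord by (rule order_subr)
  interpret d: cgl Oc D using R D by unfold_locales
  note II = invertible_iinv[OF R Iinv]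
  have Yo: "omod Oc (iinv Oc I)" using iinv_omod[OF R Iinv] .
  have "1 \<in> nf_ideal_mult I (iinv Oc I)" using II(2) subr_1[OF R] by simp
  then obtain n and xs ys :: "nat \<Rightarrow> 'a" where one: "1 = (\<Sum>i<n. xs i * ys i)"
    and xy: "\<forall>i<n. xs i \<in> I \<and> ys i \<in> iinv Oc I" unfolding nf_ideal_mult_def by blast
  obtain x y where x: "x \<in> I" and y: "y \<in> iinv Oc I" and xyD: "cg D (x * y) 1"
  proof -
    have X0: "0 \<in> I" using ideal_0[OF I] .
    have Xa: "\<And>a b. a \<in> I \<Longrightarrow> b \<in> I \<Longrightarrow> a + b \<in> I" using ideal_add[OF I] .
    have Xm: "\<And>r a. r \<in> Oc \<Longrightarrow> a \<in> I \<Longrightarrow> r * a \<in> I" using ideal_lmult[OF I] .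
    have Y0: "0 \<in> iinv Oc I" using omod_0[OF Yo] .
    have Ya: "\<And>a b. a \<in> iinv Oc I \<Longrightarrow> b \<in> iinv Oc I \<Longrightarrow> a + b \<in> iinv Oc I" using omod_add[OF Yo] .
    have Ym: "\<And>r a. r \<in> Oc \<Longrightarrow> a \<in> iinv Oc I \<Longrightarrow> a * r \<in> iinv Oc I"
    proof -
      fix r a assume "r \<in> Oc" "a \<in> iinv Oc I"
      hence "r * a \<in> iinv Oc I" by (rule omod_mult[OF Yo])
      thus "a * r \<in> iinv Oc I" by (simp add: mult.commute)
    qed
    have XY: "\<And>a b. a \<in> I \<Longrightarrow> b \<in> iinv Oc I \<Longrightarrow> a * b \<in> Oc" using iinv_prod .
    have S1: "cg D (\<Sum>i<n. xs i * ys i) 1" using one[symmetric] by simp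
    have "\<exists>a\<in>I. \<exists>b\<in>iinv Oc I. cg D (a * b) 1"
      using gen_idem[OF ord D nz X0 Xa Xm Y0 Ya Ym XY subr_1[OF R] _ xy S1] by simp
    thus ?thesis using that by blast
  qed
  have xO: "x \<in> Oc" using ideal_sub[OF I x] .
  have "1 \<in> nf_ideal_sum I M" unfolding IM by (rule subr_1[OF R])
  then obtain i0 m0 where i0: "i0 \<in> I" "m0 \<in> M" "1 = i0 + m0"
    by (rule isum_elim)
  define v where "v = y * i0"
  have vO: "v \<in> Oc" unfolding v_def using iinv_prod[OF i0(1) y] by (simp add: mult.commute)
  have xyD': "x * y - 1 \<in> D" using xyD unfolding cg_def .
  have "v * x - 1 = (x * y - 1) * i0 - m0" unfolding v_def using i0(3) by (simp add: algebra_simps)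
  moreover have "(x * y - 1) * i0 \<in> M" using DM xyD' ideal_rmult[OF M ideal_sub[OF I i0(1)]] by blast
  ultimately have vx: "cg M (v * x) 1" unfolding cg_def using ideal_diff[OF R M _ i0(2)] by simp
  obtain u u' where u: "u \<in> Oc" "u' \<in> Oc" "cg M u v" "cg D (u * u') 1"
    using unit_lift[OF ord D nz M DM vO xO vx] by blast
  define \<beta>0 where "\<beta>0 = x * u"
  define y' where "y' = y * u'"
  have b0I: "\<beta>0 \<in> I" unfolding \<beta>0_def using ideal_lmult[OF I u(1) x] by (simp add: mult.commute)
  have y'Y: "y' \<in> iinv Oc I" unfolding y'_def using omod_mult[OF Yo u(2) y] by (simp add: mult.commute)
  have b0M: "\<beta>0 - 1 \<in> M"
  proof -
    have "\<beta>0 - 1 = x * (u - v) + (v * x - 1)" unfolding \<beta>0_def by (simp add: algebra_simps)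
    moreover have "x * (u - v) \<in> M" using ideal_lmult[OF M xO] u(3) unfolding cg_def by blast
    ultimately show ?thesis using vx ideal_add[OF M, of "x * (u - v)" "v * x - 1"] unfolding cg_def
      by (simp add: algebra_simps)
  qed
  have b0D: "\<beta>0 * y' - 1 \<in> D"
  proof -
    have "\<beta>0 * y' - 1 = (x * y - 1) * (u * u') + (u * u' - 1)" unfolding \<beta>0_def y'_def by (simp add: algebra_simps)
    moreover have "(x * y - 1) * (u * u') \<in> D" using ideal_rmult[OF D subr_mult[OF R u(1,2)] xyD'] .
    ultimately show ?thesis using u(4) ideal_add[OF D, of "(x * y - 1) * (u * u')" "u * u' - 1"] unfolding cg_def
      by (simp add: algebra_simps)
  qed
  obtain c :: int where c: "c > 0" "of_int c \<in> D" using int_in_ideal[OF ord D nz] by blast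
  obtain c2 :: int where c2: "c2 > 0" "of_int c2 \<in> I"
    using int_in_ideal[OF ord I invertible_nonzero[OF R Iinv I]] by blast
  obtain B where B: "\<forall>v\<in>{\<rho> \<beta>0 | \<rho>. nf_real_embedding \<rho>}. \<bar>v\<bar> \<le> B"
    using finite_bound[OF emb_vals_finite[OF ord, of \<beta>0]] by blast
  define N0 :: int where "N0 = \<lceil>\<bar>B\<bar>\<rceil> + 1"
  have good: "\<beta> \<in> I \<and> \<beta> - 1 \<in> M \<and> (\<forall>\<rho>\<in>Sig. \<rho> \<beta> > 0) \<and> \<beta> * y' - 1 \<in> D"
    if N: "N \<ge> N0" and \<beta>: "\<beta> = \<beta>0 + of_int (N * c * c2)" for N \<beta>
  proof (intro conjI)
    have cb: "of_int \<lceil>\<bar>B\<bar>\<rceil> \<ge> \<bar>B\<bar>" by (rule le_of_int_ceiling)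
    have cb0: "\<lceil>\<bar>B\<bar>\<rceil> \<ge> 0" by simp
    have N1: "N \<ge> 1" using N cb0 unfolding N0_def by linarith
    have N2: "of_int N > B"
    proof -
      have "of_int N \<ge> of_int \<lceil>\<bar>B\<bar>\<rceil> + (1::real)" using N unfolding N0_def by linarith
      thus ?thesis using cb abs_ge_self[of B] by linarith
    qed
    have e1: "(of_int (N * c * c2) :: 'a) = of_int (N * c) * of_int c2" by simp
    have e2: "(of_int (N * c * c2) :: 'a) = of_int (N * c2) * of_int c" by (simp add: algebra_simps)
    show "\<beta> \<in> I" unfolding \<beta> e1 using ideal_add[OF I b0I ideal_lmult[OF I subr_of_int[OF R] c2(2)]] .
    show "\<beta> - 1 \<in> M" using ideal_add[OF M b0M ideal_lmult[OF M subr_of_int[OF R] subsetD[OF DM c(2)]], of "N * c2"]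
      unfolding \<beta> e2 by (simp add: algebra_simps)
    show "\<beta> * y' - 1 \<in> D"
    proof -
      have "\<beta> * y' - 1 = (\<beta>0 * y' - 1) + (of_int c2 * y') * of_int (N * c)"
        unfolding \<beta> e1 by (simp add: algebra_simps)
      moreover have "(of_int c2 * y') * of_int (N * c) \<in> D"
      proof -
        have "(of_int (N * c) :: 'a) = of_int N * of_int c" by simp
        hence eq: "(of_int c2 * y') * of_int (N * c) = (of_int c2 * y' * of_int N) * of_int c" by (simp add: algebra_simps)
        have mO: "of_int c2 * y' * of_int N \<in> Oc"
          using subr_mult[OF R iinv_prod[OF c2(2) y'Y] subr_of_int[OF R]] .
        show ?thesis unfolding eq by (rule ideal_lmult[OF D mO c(2)])
      qed
      ultimately show ?thesis using ideal_add[OF D b0D, of "(of_int c2 * y') * of_int (N * c)"]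
        by (simp add: algebra_simps)
    qed
    show "\<forall>\<rho>\<in>Sig. \<rho> \<beta> > 0"
    proof
      fix \<rho> assume "\<rho> \<in> Sig"
      hence e: "nf_real_embedding \<rho>" using Sig by blast
      have "\<bar>\<rho> \<beta>0\<bar> \<le> B" using B e by blast
      moreover have "real_of_int (N * c * c2) \<ge> of_int N"
      proof -
        have "N * 1 \<le> N * (c * c2)" using N1 c(1) c2(1) by (intro mult_left_mono) (auto simp: mult_ge1_I int_one_le_iff_zero_less)
        hence "real_of_int (N * 1) \<le> real_of_int (N * (c * c2))" by (rule of_int_le_iff[THEN iffD2])
        thus ?thesis by (simp add: mult.assoc)
      qed
      moreover have "\<rho> \<beta> = \<rho> \<beta>0 + of_int (N * c * c2)" unfolding \<beta> using emb_basic(3)[OF e] emb_of_int[OF e, of "N * c * c2"] by (simp del: of_int_mult)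
      ultimately show "\<rho> \<beta> > 0" using N2 by linarith
    qed
  qed
  show ?thesis
  proof (cases "\<beta>0 + of_int (N0 * c * c2) = 0")
    case False thus ?thesis using good[OF order_refl refl] y'Y by blast
  next
    case True
    have "\<beta>0 + of_int ((N0 + 1) * c * c2) = \<beta>0 + of_int (N0 * c * c2) + of_int (c * c2)"
      by (simp add: algebra_simps)
    also have "\<dots> \<noteq> 0" using True c(1) c2(1) by simp
    finally show ?thesis using good[of "N0 + 1", OF _ refl] y'Y by fastforce
  qed
qed



lemma integral_class:
  assumes ord: "nf_is_order Oc" and D: "nf_integral_ideal Oc D" and nz: "D \<noteq> {0}"
    and M: "nf_integral_ideal Oc M" and DM: "D \<subseteq> M"
    and I: "nf_integral_ideal Oc I" and Iinv: "nf_invertible Oc I" and IM: "nf_ideal_sum I M = Oc"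
    and Sig: "\<forall>\<rho>\<in>Sig. nf_real_embedding \<rho>"
  shows "\<exists>\<gamma>. \<gamma> \<noteq> 0 \<and> nf_cong1 Oc M \<gamma> \<and> (\<forall>\<rho>\<in>Sig. \<rho> \<gamma> > 0) \<and>
     nf_ideal_mult (nf_principal Oc \<gamma>) I \<in> nf_Jstar Oc D"
proof -
  have R: "subr Oc" using ord by (rule order_subr)
  obtain \<beta> y where b: "\<beta> \<in> I" "\<beta> \<noteq> 0" "\<beta> - 1 \<in> M" "\<forall>\<rho>\<in>Sig. \<rho> \<beta> > 0" and y: "y \<in> iinv Oc I"
    and by1: "\<beta> * y - 1 \<in> D"
    using key_gen[OF ord D nz M DM I Iinv IM Sig] by blast
  note II = invertible_iinv[OF R Iinv]
  define \<gamma> where "\<gamma> = inverse \<beta>"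
  define J where "J = nf_ideal_mult (nf_principal Oc \<beta>) (iinv Oc I)"
  define K where "K = nf_ideal_mult (nf_principal Oc \<gamma>) I"
  have pI: "nf_principal Oc \<beta> \<subseteq> I" unfolding nf_principal_def
  proof
    fix z assume "z \<in> (*) \<beta> ` Oc"
    then obtain u where "u \<in> Oc" "z = \<beta> * u" by blast
    thus "z \<in> I" using ideal_lmult[OF I \<open>u \<in> Oc\<close> b(1)] by (simp add: mult.commute)
  qed
  have JO: "J \<subseteq> Oc" unfolding J_def using imult_mono[OF pI order_refl, of "iinv Oc I"] II(2) by simp
  have Ji: "nf_integral_ideal Oc J" using JO imult_omod[OF iinv_omod[OF R Iinv], of "nf_principal Oc \<beta>"]
    unfolding J_def nf_integral_ideal_def omod_def by blast
  have Kf: "nf_fractional_ideal Oc K" unfolding K_def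
    using imult_frac[OF R principal_frac[OF R] integral_frac[OF I]] b(2) \<gamma>_def by simp
  have "nf_ideal_mult J K = nf_ideal_mult (nf_ideal_mult (nf_principal Oc \<beta>) (nf_principal Oc \<gamma>))
      (nf_ideal_mult I (iinv Oc I))" unfolding J_def K_def by (simp only: imult_ac)
  also have "\<dots> = Oc" unfolding principal_mult[OF R] \<gamma>_def using b(2) II(2) OO[OF R] principal_1[of Oc] by simp
  finally have JK: "nf_ideal_mult J K = Oc" .
  have Jinv: "nf_invertible Oc J" using invertibleI[OF integral_frac[OF Ji] Kf JK] .
  have iJ: "iinv Oc J = K" using iinv_unique[OF R integral_frac[OF Ji] Kf JK] .
  have JD: "nf_ideal_sum J D = Oc"
  proof -
    have "\<beta> * y \<in> J" unfolding J_def using imult_prod[OF principal_mem[OF R] y] .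
    moreover have "1 - \<beta> * y \<in> D" using ideal_uminus[OF R D by1] by simp
    moreover have "1 = \<beta> * y + (1 - \<beta> * y)" by simp
    ultimately have "1 \<in> nf_ideal_sum J D" unfolding nf_ideal_sum_def by blast
    thus ?thesis using isum_Oc[OF R Ji D] by blast
  qed
  have OD: "nf_ideal_sum Oc D = Oc"
  proof -
    have "1 \<in> nf_ideal_sum Oc D" unfolding nf_ideal_sum_def using subr_1[OF R] ideal_0[OF D]
      by (intro CollectI exI[of _ 1] exI[of _ 0]) simp
    thus ?thesis using isum_Oc[OF R subr_integral[OF R] D] by blast
  qed
  have Oinv: "nf_invertible Oc Oc"
    using invertibleI[OF integral_frac[OF subr_integral[OF R]] integral_frac[OF subr_integral[OF R]] OO[OF R]] .
  have "K = nf_ideal_mult Oc (iinv Oc J)" unfolding iJ using imult_one[OF R frac_omod[OF Kf]] by simp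
  hence "K \<in> nf_Jstar Oc D" unfolding J_char[OF R D]
    using subr_integral[OF R] Ji Oinv Jinv OD JD by blast
  moreover have "nf_cong1 Oc M \<gamma>" unfolding \<gamma>_def using cong1_inv[OF R M cong1_int[OF R M b(3)] b(2)] .
  moreover have "\<forall>\<rho>\<in>Sig. \<rho> \<gamma> > 0" unfolding \<gamma>_def using b(2,4) Sig by (simp add: emb_inverse)
  moreover have "\<gamma> \<noteq> 0" unfolding \<gamma>_def using b(2) by simp
  ultimately show ?thesis unfolding K_def by blast
qed



theorem lemma5p12:
  fixes Oc D M :: "'a::field_char_0 set" and Sig :: "('a \<Rightarrow> real) set"
  assumes "nf_is_order Oc"
    and "nf_integral_ideal Oc D" and "nf_integral_ideal Oc M"
    and "D \<noteq> {0}" and "M \<noteq> {0}" and "D \<subseteq> M"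
    and "\<forall>\<rho>\<in>Sig. nf_real_embedding \<rho>"
  shows "nf_Jstar Oc D \<subseteq> nf_Jstar Oc M \<and>
    (\<exists>h. h \<in> iso (nf_Jgroup Oc D Mod nf_Pd Oc D M Sig) (nf_Jgroup Oc M Mod nf_P Oc M Sig) \<and>
         (\<forall>A \<in> nf_Jstar Oc D.
            h (nf_Pd Oc D M Sig #>\<^bsub>nf_Jgroup Oc D\<^esub> A) = nf_P Oc M Sig #>\<^bsub>nf_Jgroup Oc M\<^esub> A))"
proof -
  note ord = assms(1) and D = assms(2) and M = assms(3) and nz = assms(4) and DM = assms(6) and Sig = assms(7)
  have R: "subr Oc" using ord by (rule order_subr)
  define JD where "JD = nf_Jgroup Oc D"
  define JM where "JM = nf_Jgroup Oc M"
  define P where "P = nf_P Oc M Sig"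
  define Pd where "Pd = nf_Pd Oc D M Sig"
  have GD: "comm_group JD" unfolding JD_def by (rule J_group[OF R D])
  have GM: "comm_group JM" unfolding JM_def by (rule J_group[OF R M])
  have gD: "group JD" using GD comm_group.axioms(2) by blast
  have gM: "group JM" using GM comm_group.axioms(2) by blast
  have cD: "carrier JD = nf_Jstar Oc D" unfolding JD_def nf_Jgroup_def by simp
  have cM: "carrier JM = nf_Jstar Oc M" unfolding JM_def nf_Jgroup_def by simp
  have mD: "\<And>A B. A \<otimes>\<^bsub>JD\<^esub> B = nf_ideal_mult A B" unfolding JD_def nf_Jgroup_def by simp
  have mM: "\<And>A B. A \<otimes>\<^bsub>JM\<^esub> B = nf_ideal_mult A B" unfolding JM_def nf_Jgroup_def by simp
  have oM: "\<one>\<^bsub>JM\<^esub> = Oc" unfolding JM_def nf_Jgroup_def by simp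
  have rc: "\<And>X A. X #>\<^bsub>JD\<^esub> A = X #>\<^bsub>JM\<^esub> A" unfolding r_coset_def mD mM ..
  have sub: "nf_Jstar Oc D \<subseteq> nf_Jstar Oc M"
  proof
    fix A assume "A \<in> nf_Jstar Oc D"
    then obtain A1 B1 where a: "nf_integral_ideal Oc A1" "nf_integral_ideal Oc B1"
     "nf_invertible Oc A1" "nf_invertible Oc B1" "nf_ideal_sum A1 D = Oc" "nf_ideal_sum B1 D = Oc"
     "A = nf_ideal_mult A1 (iinv Oc B1)" unfolding J_char[OF R D] by blast
    have "nf_ideal_sum A1 M = Oc" "nf_ideal_sum B1 M = Oc"
      using coprime_mono[OF R a(1) M DM a(5)] coprime_mono[OF R a(2) M DM a(6)] .
    thus "A \<in> nf_Jstar Oc M" unfolding J_char[OF R M] using a by blast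
  qed
  have invM: "inv\<^bsub>JM\<^esub> A = iinv Oc A" if "A \<in> nf_Jstar Oc M" for A
    using group.inv_equality[OF gM, of "iinv Oc A" A] J_inv[OF R M that] that cM mM oM by simp
  have PsubM: "subgroup P JM"
  proof (rule group.subgroupI[OF gM])
    show "P \<subseteq> carrier JM" unfolding cM P_def using P_in_J[OF R M] by blast
    show "P \<noteq> {}" unfolding P_def using P_one[OF R M Sig] by blast
    fix A assume A: "A \<in> P"
    show "inv\<^bsub>JM\<^esub> A \<in> P" using invM[OF P_in_J[OF R M]] P_inv[OF R M Sig] A unfolding P_def by simp
    fix B assume "B \<in> P"
    thus "A \<otimes>\<^bsub>JM\<^esub> B \<in> P" unfolding mM P_def using P_mult[OF R M Sig] A P_def by blast
  qed
  have nP: "P \<lhd> JM" using comm_group.subgroup_imp_normal[OF GM PsubM] .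
  have PM: "P \<subseteq> carrier JM" using PsubM subgroup.subset by blast
  define \<phi> where "\<phi> = (\<lambda>A. P #>\<^bsub>JM\<^esub> A)"
  have cMod: "carrier (JM Mod P) = {P #>\<^bsub>JM\<^esub> a | a. a \<in> carrier JM}"
    unfolding FactGroup_def RCOSETS_def by auto
  have hom: "\<phi> \<in> hom JD (JM Mod P)"
    unfolding hom_def
  proof (intro CollectI conjI ballI)
    show "\<phi> \<in> carrier JD \<rightarrow> carrier (JM Mod P)" unfolding cMod \<phi>_def cD using sub cM by blast
    fix A B assume A: "A \<in> carrier JD" and B: "B \<in> carrier JD"
    have AM: "A \<in> carrier JM" and BM: "B \<in> carrier JM" using A B sub cD cM by auto
    have "\<phi> (A \<otimes>\<^bsub>JD\<^esub> B) = P #>\<^bsub>JM\<^esub> (A \<otimes>\<^bsub>JM\<^esub> B)" unfolding \<phi>_def mD mM ..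
    also have "\<dots> = (P #>\<^bsub>JM\<^esub> A) <#>\<^bsub>JM\<^esub> (P #>\<^bsub>JM\<^esub> B)" using normal.rcos_sum[OF nP AM BM] by simp
    also have "\<dots> = \<phi> A \<otimes>\<^bsub>JM Mod P\<^esub> \<phi> B" unfolding \<phi>_def FactGroup_def by simp
    finally show "\<phi> (A \<otimes>\<^bsub>JD\<^esub> B) = \<phi> A \<otimes>\<^bsub>JM Mod P\<^esub> \<phi> B" .
  qed
  have gh: "group_hom JD (JM Mod P) \<phi>"
    unfolding group_hom_def group_hom_axioms_def using gD normal.factorgroup_is_group[OF nP] hom by blast
  have PJ: "\<And>A. A \<in> P \<Longrightarrow> nf_invertible Oc A" using P_in_J[OF R M] J_invertible unfolding P_def by blast
  have ker: "kernel JD (JM Mod P) \<phi> = Pd"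
  proof -
    have "\<phi> A = P \<longleftrightarrow> A \<in> P" if "A \<in> carrier JM" for A
    proof
      assume "\<phi> A = P"
      thus "A \<in> P" using group.rcos_self[OF gM that PsubM] unfolding \<phi>_def by simp
    next
      assume "A \<in> P"
      thus "\<phi> A = P" unfolding \<phi>_def using subgroup.rcos_const[OF PsubM gM] by blast
    qed
    moreover have "\<one>\<^bsub>JM Mod P\<^esub> = P" unfolding FactGroup_def by simp
    ultimately have "kernel JD (JM Mod P) \<phi> = {A \<in> nf_Jstar Oc D. A \<in> P}"
      unfolding kernel_def cD using sub cM by auto
    also have "\<dots> = Pd" unfolding Pd_def nf_Pd_def nf_Jstar_def P_def using PJ[unfolded P_def] by blast
    finally show ?thesis .
  qed
  have surj: "\<phi> ` carrier JD = carrier (JM Mod P)"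
  proof
    show "\<phi> ` carrier JD \<subseteq> carrier (JM Mod P)" using hom unfolding hom_def by blast
    show "carrier (JM Mod P) \<subseteq> \<phi> ` carrier JD"
    proof
      fix X assume "X \<in> carrier (JM Mod P)"
      then obtain A where A: "A \<in> nf_Jstar Oc M" and X: "X = P #>\<^bsub>JM\<^esub> A" unfolding cMod cM by blast
      obtain A1 B1 where a: "nf_integral_ideal Oc A1" "nf_integral_ideal Oc B1"
       "nf_invertible Oc A1" "nf_invertible Oc B1" "nf_ideal_sum A1 M = Oc" "nf_ideal_sum B1 M = Oc"
       "A = nf_ideal_mult A1 (iinv Oc B1)" using A unfolding J_char[OF R M] by blast
      obtain \<gamma>1 where g1: "\<gamma>1 \<noteq> 0" "nf_cong1 Oc M \<gamma>1" "\<forall>\<rho>\<in>Sig. \<rho> \<gamma>1 > 0"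
        "nf_ideal_mult (nf_principal Oc \<gamma>1) A1 \<in> nf_Jstar Oc D"
        using integral_class[OF ord D nz M DM a(1) a(3) a(5) Sig] by blast
      obtain \<gamma>2 where g2: "\<gamma>2 \<noteq> 0" "nf_cong1 Oc M \<gamma>2" "\<forall>\<rho>\<in>Sig. \<rho> \<gamma>2 > 0"
        "nf_ideal_mult (nf_principal Oc \<gamma>2) B1 \<in> nf_Jstar Oc D"
        using integral_class[OF ord D nz M DM a(2) a(4) a(6) Sig] by blast
      define K1 where "K1 = nf_ideal_mult (nf_principal Oc \<gamma>1) A1"
      define K2 where "K2 = nf_ideal_mult (nf_principal Oc \<gamma>2) B1"
      define A' where "A' = nf_ideal_mult K1 (iinv Oc K2)"
      have A'D: "A' \<in> nf_Jstar Oc D" unfolding A'_def K1_def K2_def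
        using J_mult[OF R D g1(4) J_inv(1)[OF R D g2(4)]] .
      note IB = invertible_iinv[OF R a(4)]
      have f2: "nf_fractional_ideal Oc (nf_ideal_mult (nf_principal Oc (inverse \<gamma>2)) (iinv Oc B1))"
        using imult_frac[OF R principal_frac[OF R] IB(1)] g2(1) by simp
      have "nf_ideal_mult K2 (nf_ideal_mult (nf_principal Oc (inverse \<gamma>2)) (iinv Oc B1)) =
        nf_ideal_mult (nf_ideal_mult (nf_principal Oc \<gamma>2) (nf_principal Oc (inverse \<gamma>2))) (nf_ideal_mult B1 (iinv Oc B1))"
        unfolding K2_def by (simp only: imult_ac)
      also have "\<dots> = Oc" using principal_inv(3)[OF R g2(1)] IB(2) OO[OF R] by simp
      finally have iK2: "iinv Oc K2 = nf_ideal_mult (nf_principal Oc (inverse \<gamma>2)) (iinv Oc B1)"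
        using iinv_unique[OF R J_frac[OF g2(4)[folded K2_def]] f2] by blast
      define p where "p = nf_principal Oc (\<gamma>1 * inverse \<gamma>2)"
      have A'eq: "A' = nf_ideal_mult p A"
      proof -
        have "A' = nf_ideal_mult (nf_ideal_mult (nf_principal Oc \<gamma>1) (nf_principal Oc (inverse \<gamma>2)))
            (nf_ideal_mult A1 (iinv Oc B1))"
          unfolding A'_def iK2 K1_def by (simp only: imult_ac)
        thus ?thesis unfolding p_def principal_mult[OF R] a(7) .
      qed
      have pP: "p \<in> P"
      proof -
        have "nf_principal Oc \<gamma>1 \<in> P" unfolding P_def nf_P_def using g1 by blast
        moreover have "nf_principal Oc \<gamma>2 \<in> P" unfolding P_def nf_P_def using g2 by blast
        hence "iinv Oc (nf_principal Oc \<gamma>2) \<in> P" using P_inv[OF R M Sig] unfolding P_def by blast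
        hence "nf_principal Oc (inverse \<gamma>2) \<in> P" using principal_inv(2)[OF R g2(1)] by simp
        ultimately show ?thesis unfolding p_def using P_mult[OF R M Sig] principal_mult[OF R] unfolding P_def
          by metis
      qed
      have pM: "p \<in> carrier JM" using pP PM by blast
      have AM: "A \<in> carrier JM" using A cM by simp
      have "\<phi> A' = P #>\<^bsub>JM\<^esub> (p \<otimes>\<^bsub>JM\<^esub> A)" unfolding \<phi>_def A'eq mM ..
      also have "\<dots> = (P #>\<^bsub>JM\<^esub> p) #>\<^bsub>JM\<^esub> A" using group.coset_mult_assoc[OF gM PM pM AM] by simp
      also have "P #>\<^bsub>JM\<^esub> p = P" using subgroup.rcos_const[OF PsubM gM pP] .
      finally have "\<phi> A' = X" using X by simp
      thus "X \<in> \<phi> ` carrier JD" using A'D cD by blast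
    qed
  qed
  have iso: "(\<lambda>X. the_elem (\<phi> ` X)) \<in> iso (JD Mod Pd) (JM Mod P)"
    using group_hom.FactGroup_iso_set[OF gh surj] ker by simp
  have PdD: "subgroup Pd JD" using group_hom.subgroup_kernel[OF gh] ker by simp
  have val: "the_elem (\<phi> ` (Pd #>\<^bsub>JD\<^esub> A)) = P #>\<^bsub>JM\<^esub> A" if A: "A \<in> nf_Jstar Oc D" for A
  proof (rule the_elem_image_unique)
    have AD: "A \<in> carrier JD" using A cD by simp
    show "Pd #>\<^bsub>JD\<^esub> A \<noteq> {}" using group.rcos_self[OF gD AD PdD] by blast
    fix y assume "y \<in> Pd #>\<^bsub>JD\<^esub> A"
    then obtain q where q: "q \<in> Pd" "y = q \<otimes>\<^bsub>JD\<^esub> A" unfolding r_coset_def by blast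
    have qP: "q \<in> P" using q(1) unfolding Pd_def nf_Pd_def P_def by blast
    have qM: "q \<in> carrier JM" using qP PM by blast
    have AM: "A \<in> carrier JM" using A sub cM by blast
    have "\<phi> y = P #>\<^bsub>JM\<^esub> (q \<otimes>\<^bsub>JM\<^esub> A)" unfolding \<phi>_def q(2) mD mM ..
    also have "\<dots> = (P #>\<^bsub>JM\<^esub> q) #>\<^bsub>JM\<^esub> A" using group.coset_mult_assoc[OF gM PM qM AM] by simp
    also have "P #>\<^bsub>JM\<^esub> q = P" using subgroup.rcos_const[OF PsubM gM qP] .
    finally show "\<phi> y = P #>\<^bsub>JM\<^esub> A" .
  qed
  show ?thesis unfolding JD_def[symmetric] JM_def[symmetric] P_def[symmetric] Pd_def[symmetric]
    using sub iso val by blast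
qed


end
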